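(* Let $n\le2$ and write $f_n=\mathfrak P_\varphi(\lambda^n\varphi_\lambda)=\sum_{i\ge1}f^{(i)}\lambda^i$, the coefficients $f^{(i)}$ regarded as functions on the covering $\bar\tau_*$ via $\varphi^{(1)}=-y$, $\varphi^{(2)}=-x$, $\varphi^{(3)}=-z-\tfrac12y^2$. Put $Z=(z_y+y)f^{(1)}+z_xf^{(2)}-f^{(3)}$ and $\Phi^{(k)}=f^{(k)}+f^{(2)}\varphi^{(k)}_x+f^{(1)}\varphi^{(k)}_y$ for $k\ge4$. Then the vector field $\mathcal S=\sum_X\tilde D_X(Z)\,\partial/\partial z_X+\sum_{k\ge4}\Phi^{(k)}\,\partial/\partial\varphi^{(k)}$ (sum over all internal coordinates $z_X$, $\tilde D_X=\tilde D_x^a\tilde D_y^b$ for $X=x^ay^b$) is a nonlocal symmetry in $\bar\tau_*$, i.e. $[\mathcal S,\tilde D_x]=[\mathcal S,\tilde D_y]=0$.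
   Context: The Gibbons–Tsarev equation $\mathcal E$ is $z_{yy}+z_xz_{xy}-z_yz_{xx}+1=0$ with internal coordinates $x,y,z_X$ ($z_X=\partial^{a+b}z/\partial x^a\partial y^b$ for $X=x^ay^b$, $b\in\{0,1\}$) and total derivatives $D_x,D_y$. Put $\varphi^{(-1)}=1$, $\varphi^{(0)}=0$, $\varphi^{(1)}=-y$, $\varphi^{(2)}=-x$, $\varphi^{(3)}=-z-\tfrac12y^2$, let $\varphi^{(k)}$, $k\ge4$, be new coordinates and $\varphi(\lambda)=1/\lambda+\sum_{k\ge1}\varphi^{(k)}\lambda^k$, $\varphi_\lambda=d\varphi/d\lambda$. The covering $\bar\tau_*$ has coordinates $x,y,z_X,\varphi^{(k)}$ ($k\ge4$) and commuting total derivatives $\tilde D_x=D_x+\sum_{k\ge4}\varphi^{(k)}_x\partial/\partial\varphi^{(k)}$, $\tilde D_y=D_y+\sum_{k\ge4}\varphi^{(k)}_y\partial/\partial\varphi^{(k)}$, where $\varphi^{(k)}_x,\varphi^{(k)}_y$ (polynomials in $x,y,z,z_x,z_y,\varphi^{(4)},\dots,\varphi^{(k-1)}$) are uniquely determined by requiring, with $\varphi_x=\sum_{k\ge1}\tilde D_x(\varphi^{(k)})\lambda^k$, $\varphi_y=\sum_{k\ge1}\tilde D_y(\varphi^{(k)})\lambda^k$, that $(\varphi^2-z_x\varphi-z_y)\varphi_x=-1$ and $(\varphi^2-z_x\varphi-z_y)\varphi_y=-(\varphi-z_x)$ coefficientwise in $\lambda$. Notation $\mathfrak P_\varphi$: $w=1/\varphi(\lambda)=\lambda+O(\lambda^3)$;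 any Laurent series $F$ in $\lambda$ with finitely many negative powers is uniquely $F=\sum_{k\le m}c_k\varphi(\lambda)^k$ with $c_k$ independent of $\lambda$; $\mathfrak P_\varphi F=F-\sum_{k=0}^mc_k\varphi(\lambda)^k$, a power series in $\lambda$ without constant term. *)

theory Defs
  imports Complex_Main "HOL-Library.Poly_Mapping"
    "HOL-Computational_Algebra.Formal_Laurent_Series"
begin

text \<open>Coordinates: x, y, the internal coordinates z_X of the Gibbons-Tsarev
 equation (X = x^a y^b, b in {0,1}; ZC a False = z_{x^a}, ZC a True = z_{x^a y}),
 and the nonlocal coordinates PhiC j = phi^(j+4) (so k = j + 4 >= 4).\<close>

datatype coord = XC | YC | ZC nat bool | PhiC nat

text \<open>Functions on the covering: polynomials over the rationals in these
 coordinates (all objects in the statement are polynomial).\<close>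

type_synonym fn = "(coord \<Rightarrow>\<^sub>0 nat) \<Rightarrow>\<^sub>0 rat"

definition Var :: "coord \<Rightarrow> fn" where
  "Var v = Poly_Mapping.single (Poly_Mapping.single v 1) 1"

definition cst :: "rat \<Rightarrow> fn" where
  "cst c = Poly_Mapping.single 0 c"

definition vars :: "fn \<Rightarrow> coord set" where
  "vars p = \<Union> (Poly_Mapping.keys ` Poly_Mapping.keys p)"

definition pd :: "coord \<Rightarrow> fn \<Rightarrow> fn" where
  "pd v p = (\<Sum>m\<in>Poly_Mapping.keys p. Poly_Mapping.single (m - Poly_Mapping.single v 1)
                              (of_nat (Poly_Mapping.lookup m v) * Poly_Mapping.lookup p m))"

definition vf :: "(coord \<Rightarrow> fn) \<Rightarrow> fn \<Rightarrow> fn" where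
  "vf g p = (\<Sum>v\<in>vars p. g v * pd v p)"

definition Dx_eq :: "fn \<Rightarrow> fn" where
  "Dx_eq = vf (\<lambda>v. case v of XC \<Rightarrow> 1 | YC \<Rightarrow> 0 | ZC a b \<Rightarrow> Var (ZC (Suc a) b) | PhiC j \<Rightarrow> 0)"

text \<open>z_yy expressed through the equation: z_yy = z_y z_xx - z_x z_xy - 1.\<close>
definition zyy :: fn where
  "zyy = Var (ZC 0 True) * Var (ZC 2 False) - Var (ZC 1 False) * Var (ZC 1 True) - 1"

text \<open>Covering total derivatives, given the values ax j = phi^(j+4)_x,
 ay j = phi^(j+4)_y.\<close>
definition Dtx :: "(nat \<Rightarrow> fn) \<Rightarrow> fn \<Rightarrow> fn" where
  "Dtx ax = vf (\<lambda>v. case v of XC \<Rightarrow> 1 | YC \<Rightarrow> 0 | ZC a b \<Rightarrow> Var (ZC (Suc a) b)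
                           | PhiC j \<Rightarrow> ax j)"

definition Dty :: "(nat \<Rightarrow> fn) \<Rightarrow> fn \<Rightarrow> fn" where
  "Dty ay = vf (\<lambda>v. case v of XC \<Rightarrow> 0 | YC \<Rightarrow> 1
                           | ZC a b \<Rightarrow> (if b then (Dx_eq ^^ a) zyy else Var (ZC a True))
                           | PhiC j \<Rightarrow> ay j)"

definition phic :: "nat \<Rightarrow> fn" where
  "phic k = (if k = 0 then 0 else if k = 1 then - Var YC else if k = 2 then - Var XC
             else if k = 3 then - Var (ZC 0 False) - cst (1/2) * Var YC ^ 2
             else Var (PhiC (k - 4)))"

definition phi :: "fn fls" where
  "phi = fls_X_inv + fps_to_fls (Abs_fps phic)"

definition dser :: "(fn \<Rightarrow> fn) \<Rightarrow> fn fls" where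
  "dser D = fps_to_fls (Abs_fps (\<lambda>k. if k = 0 then 0 else D (phic k)))"

definition Qphi :: "fn fls" where
  "Qphi = phi ^ 2 - fls_const (Var (ZC 1 False)) * phi - fls_const (Var (ZC 0 True))"

text \<open>phi^(k)_x and phi^(k)_y (indexed by j = k - 4), uniquely determined by
 (phi^2 - z_x phi - z_y) phi_x = -1 and (phi^2 - z_x phi - z_y) phi_y = -(phi - z_x).\<close>
definition phix :: "nat \<Rightarrow> fn" where
  "phix = (THE ax. Qphi * dser (Dtx ax) = - 1)"

definition phiy :: "nat \<Rightarrow> fn" where
  "phiy = (THE ay. Qphi * dser (Dty ay) = - (phi - fls_const (Var (ZC 1 False))))"

definition tDx :: "fn \<Rightarrow> fn" where "tDx = Dtx phix"
definition tDy :: "fn \<Rightarrow> fn" where "tDy = Dty phiy"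

text \<open>P_phi F = F - sum_{k=0}^m c_k phi^k, where F = sum_{k<=m} c_k phi^k;
 equivalently the unique power series G without constant term such that
 F - G is a polynomial in phi with lambda-independent coefficients.\<close>
definition Pphi :: "fn fls \<Rightarrow> fn fls" where
  "Pphi F = (THE G. (\<forall>i\<le>0. fls_nth G i = 0) \<and>
       (\<exists>(c::nat \<Rightarrow> fn) m. F = G + (\<Sum>k\<le>m. fls_const (c k) * phi ^ k)))"

definition fco :: "int \<Rightarrow> nat \<Rightarrow> fn" where
  "fco n i = fls_nth (Pphi (fls_X_intpow n * fls_deriv phi)) (int i)"

definition Zgen :: "int \<Rightarrow> fn" where
  "Zgen n = (Var (ZC 0 True) + Var YC) * fco n 1 + Var (ZC 1 False) * fco n 2 - fco n 3"

definition PhiS :: "int \<Rightarrow> nat \<Rightarrow> fn" where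
  "PhiS n j = fco n (j + 4) + fco n 2 * phix j + fco n 1 * phiy j"

definition Sfield :: "int \<Rightarrow> fn \<Rightarrow> fn" where
  "Sfield n = vf (\<lambda>v. case v of XC \<Rightarrow> 0 | YC \<Rightarrow> 0
                         | ZC a b \<Rightarrow> (tDx ^^ a) ((tDy ^^ (if b then 1 else 0)) (Zgen n))
                         | PhiC j \<Rightarrow> PhiS n j)"

end

theory Submission
  imports Defs
begin


section \<open>Order on coordinates (to get an integral domain)\<close>

fun ccode :: "coord \<Rightarrow> nat" where
  "ccode XC = 0" | "ccode YC = 1" | "ccode (ZC a b) = 2 + 3 * (2*a + (if b then 1 else 0))"
| "ccode (PhiC j) = 3 + 3 * j"

lemma ccode_inj: "inj ccode"
proof (rule injI)
  fix u v assume "ccode u = ccode v" thus "u = v"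
    by (cases u; cases v; auto split: if_splits; presburger)
qed

instantiation coord :: linorder begin
definition "less_eq_coord u v = (ccode u \<le> ccode v)"
definition "less_coord u v = (ccode u < ccode v)"
instance by standard (auto simp: less_eq_coord_def less_coord_def dest: injD[OF ccode_inj])
end

lemma fn_nzd: "(a::fn) * b = 0 \<longleftrightarrow> a = 0 \<or> b = 0" by simp

lemma pm_sum_repr: "(p :: ('a \<Rightarrow>\<^sub>0 'b::comm_monoid_add)) = (\<Sum>k\<in>Poly_Mapping.keys p. Poly_Mapping.single k (Poly_Mapping.lookup p k))"
proof (rule poly_mapping_eqI)
  fix k'
  have "Poly_Mapping.lookup (\<Sum>k\<in>Poly_Mapping.keys p. Poly_Mapping.single k (Poly_Mapping.lookup p k)) k'
     = (\<Sum>k\<in>Poly_Mapping.keys p. (Poly_Mapping.lookup p k when k = k'))"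
    by (simp add: lookup_sum lookup_single)
  also have "\<dots> = Poly_Mapping.lookup p k'"
  proof (cases "k' \<in> Poly_Mapping.keys p")
    case True
    have "(\<Sum>k\<in>Poly_Mapping.keys p. (Poly_Mapping.lookup p k when k = k')) = (\<Sum>k\<in>{k'}. (Poly_Mapping.lookup p k when k = k'))"
      by (rule sum.mono_neutral_right) (use True in auto)
    then show ?thesis by simp
  next
    case False
    then show ?thesis by (auto simp: in_keys_iff when_def intro!: sum.neutral)
  qed
  finally show "Poly_Mapping.lookup p k' = Poly_Mapping.lookup (\<Sum>k\<in>Poly_Mapping.keys p. Poly_Mapping.single k (Poly_Mapping.lookup p k)) k'" by simp
qed

lemma pm_sum_repr_superset:
  assumes "finite A" "Poly_Mapping.keys p \<subseteq> A"
  shows "(p :: ('a \<Rightarrow>\<^sub>0 'b::comm_monoid_add)) = (\<Sum>k\<in>A. Poly_Mapping.single k (Poly_Mapping.lookup p k))"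
proof -
  have "(\<Sum>k\<in>A. Poly_Mapping.single k (Poly_Mapping.lookup p k)) = (\<Sum>k\<in>Poly_Mapping.keys p. Poly_Mapping.single k (Poly_Mapping.lookup p k))"
    by (rule sum.mono_neutral_right) (use assms in \<open>auto simp: in_keys_iff\<close>)
  then show ?thesis using pm_sum_repr[of p] by simp
qed

lemma pd_superset:
  assumes "finite A" "Poly_Mapping.keys p \<subseteq> A"
  shows "pd v p = (\<Sum>m\<in>A. Poly_Mapping.single (m - Poly_Mapping.single v 1)
                              (of_nat (Poly_Mapping.lookup m v) * Poly_Mapping.lookup p m))"
  unfolding pd_def
  by (rule sum.mono_neutral_left) (use assms in \<open>auto simp: in_keys_iff\<close>)

lemma pd_zero[simp]: "pd v 0 = 0" by (simp add: pd_def)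

lemma pd_add: "pd v (p + q) = pd v p + pd v q"
proof -
  let ?A = "Poly_Mapping.keys p \<union> Poly_Mapping.keys q"
  have f: "finite ?A" by simp
  have "Poly_Mapping.keys (p+q) \<subseteq> ?A" by (rule keys_add)
  then show ?thesis
    by (simp add: pd_superset[OF f] lookup_add distrib_left single_add sum.distrib)
qed

lemma pd_uminus: "pd v (- p) = - pd v p"
  using pd_add[of v p "-p"] by (simp add: eq_neg_iff_add_eq_0 add.commute)

lemma pd_diff: "pd v (p - q) = pd v p - pd v q"
  using pd_add[of v p "-q"] pd_uminus[of v q] by simp

lemma pd_single: "pd v (Poly_Mapping.single m c) = Poly_Mapping.single (m - Poly_Mapping.single v 1) (of_nat (Poly_Mapping.lookup m v) * c)"
  by (simp add: pd_def)

lemma pd_sum: "pd v (sum f A) = (\<Sum>a\<in>A. pd v (f a))"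
  by (induction A rule: infinite_finite_induct) (auto simp: pd_add)

lemma minus_single_add:
  fixes a b :: "coord \<Rightarrow>\<^sub>0 nat"
  assumes "Poly_Mapping.lookup a v > 0"
  shows "a + b - Poly_Mapping.single v 1 = (a - Poly_Mapping.single v 1) + b"
  using assms by (intro poly_mapping_eqI) (auto simp: lookup_add lookup_minus lookup_single when_def)

lemma pd_mult_single:
  "pd v (Poly_Mapping.single a c * Poly_Mapping.single b d)
    = pd v (Poly_Mapping.single a c) * Poly_Mapping.single b d + Poly_Mapping.single a c * pd v (Poly_Mapping.single b d)"
proof -
  have e1: "Poly_Mapping.single (a - Poly_Mapping.single v 1 + b) (of_nat (Poly_Mapping.lookup a v) * c * d)
       = Poly_Mapping.single (a + b - Poly_Mapping.single v 1) (of_nat (Poly_Mapping.lookup a v) * c * d :: rat)"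
  proof (cases "Poly_Mapping.lookup a v > 0")
    case True show ?thesis by (simp only: minus_single_add[OF True])
  qed simp
  have e2: "Poly_Mapping.single (a + (b - Poly_Mapping.single v 1)) (c * (of_nat (Poly_Mapping.lookup b v) * d))
       = Poly_Mapping.single (a + b - Poly_Mapping.single v 1) (of_nat (Poly_Mapping.lookup b v) * c * d :: rat)"
  proof (cases "Poly_Mapping.lookup b v > 0")
    case True
    have "a + b - Poly_Mapping.single v 1 = a + (b - Poly_Mapping.single v 1)"
      using minus_single_add[OF True, of a] by (simp add: add.commute)
    then show ?thesis by (simp add: mult.commute mult.left_commute)
  qed simp
  have "pd v (Poly_Mapping.single a c * Poly_Mapping.single b d)
     = Poly_Mapping.single (a+b-Poly_Mapping.single v 1) (of_nat (Poly_Mapping.lookup (a+b) v) * (c*d))"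
    by (simp add: mult_single pd_single)
  also have "\<dots> = Poly_Mapping.single (a + b - Poly_Mapping.single v 1) (of_nat (Poly_Mapping.lookup a v) * c * d)
     + Poly_Mapping.single (a + b - Poly_Mapping.single v 1) (of_nat (Poly_Mapping.lookup b v) * c * d)"
    by (simp add: lookup_add algebra_simps flip: single_add)
  also have "\<dots> = pd v (Poly_Mapping.single a c) * Poly_Mapping.single b d + Poly_Mapping.single a c * pd v (Poly_Mapping.single b d)"
    by (simp only: mult_single pd_single e1 e2)
  finally show ?thesis .
qed

lemma pd_mult: "pd v (p * q) = pd v p * q + p * pd v (q::fn)"
proof -
  have p: "p = (\<Sum>a\<in>Poly_Mapping.keys p. Poly_Mapping.single a (Poly_Mapping.lookup p a))" by (rule pm_sum_repr)
  have q: "q = (\<Sum>b\<in>Poly_Mapping.keys q. Poly_Mapping.single b (Poly_Mapping.lookup q b))" by (rule pm_sum_repr)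
  define P where "P = Poly_Mapping.keys p"
  define QQ where "QQ = Poly_Mapping.keys q"
  define cp where "cp = Poly_Mapping.lookup p"
  define cq where "cq = Poly_Mapping.lookup q"
  let ?sa = "\<lambda>a. Poly_Mapping.single a (cp a)" and ?sb = "\<lambda>b. Poly_Mapping.single b (cq b)"
  have "pd v ((\<Sum>a\<in>P. ?sa a) * (\<Sum>b\<in>QQ. ?sb b)) = (\<Sum>a\<in>P. \<Sum>b\<in>QQ. pd v (?sa a * ?sb b))"
    by (simp add: sum_product pd_sum)
  also have "\<dots> = (\<Sum>a\<in>P. \<Sum>b\<in>QQ. pd v (?sa a) * ?sb b) + (\<Sum>a\<in>P. \<Sum>b\<in>QQ. ?sa a * pd v (?sb b))"
    by (simp add: pd_mult_single sum.distrib)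
  also have "\<dots> = pd v (\<Sum>a\<in>P. ?sa a) * (\<Sum>b\<in>QQ. ?sb b) + (\<Sum>a\<in>P. ?sa a) * pd v (\<Sum>b\<in>QQ. ?sb b)"
    by (simp add: sum_product pd_sum)
  finally have "pd v ((\<Sum>a\<in>P. ?sa a) * (\<Sum>b\<in>QQ. ?sb b))
    = pd v (\<Sum>a\<in>P. ?sa a) * (\<Sum>b\<in>QQ. ?sb b) + (\<Sum>a\<in>P. ?sa a) * pd v (\<Sum>b\<in>QQ. ?sb b)" .
  then show ?thesis using p q unfolding P_def QQ_def cp_def cq_def by simp
qed

lemma finite_vars[simp]: "finite (vars p)"
  by (simp add: vars_def)

lemma pd_notin_vars: "v \<notin> vars p \<Longrightarrow> pd v p = 0"
  unfolding pd_def vars_def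
  by (rule sum.neutral) (auto simp: in_keys_iff)

lemma vars_add: "vars (p + q) \<subseteq> vars p \<union> vars q"
  unfolding vars_def using keys_add[of p q] by auto

lemma vars_uminus[simp]: "vars (- p) = vars p"
  unfolding vars_def by simp

lemma vars_diff: "vars (p - q) \<subseteq> vars p \<union> vars q"
  using vars_add[of p "-q"] by simp

lemma vars_mult: "vars (p * q) \<subseteq> vars p \<union> vars (q::fn)"
proof
  fix v assume "v \<in> vars (p*q)"
  then obtain m where m: "m \<in> Poly_Mapping.keys (p*q)" "v \<in> Poly_Mapping.keys m" by (auto simp: vars_def)
  then obtain a b where ab: "m = a + b" "a \<in> Poly_Mapping.keys p" "b \<in> Poly_Mapping.keys q"
    using keys_mult[of p q] by blast
  then have "v \<in> Poly_Mapping.keys a \<or> v \<in> Poly_Mapping.keys b" using m(2) keys_add[of a b] by auto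
  then show "v \<in> vars p \<union> vars q" using ab by (auto simp: vars_def)
qed

lemma vars_sum: "vars (sum f A) \<subseteq> (\<Union>a\<in>A. vars (f a))"
proof (induction A rule: infinite_finite_induct)
  case (insert x F)
  then show ?case using vars_add[of "f x" "sum f F"] by auto
qed (auto simp: vars_def)

lemma vars_single: "vars (Poly_Mapping.single m c) \<subseteq> Poly_Mapping.keys m"
  by (simp add: vars_def)

lemma keys_minus_nat: "Poly_Mapping.keys (m - (n::'a \<Rightarrow>\<^sub>0 nat)) \<subseteq> Poly_Mapping.keys m"
  by (auto simp: in_keys_iff lookup_minus)

lemma vars_pd: "vars (pd v p) \<subseteq> vars p"
proof -
  have "vars (pd v p) \<subseteq> (\<Union>m\<in>Poly_Mapping.keys p. vars (Poly_Mapping.single (m - Poly_Mapping.single v 1)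
                              (of_nat (Poly_Mapping.lookup m v) * Poly_Mapping.lookup p m)))"
    unfolding pd_def by (rule vars_sum)
  also have "\<dots> \<subseteq> vars p"
  proof (rule UN_least)
    fix m assume m: "m \<in> Poly_Mapping.keys p"
    have "vars (Poly_Mapping.single (m - Poly_Mapping.single v 1)
                              (of_nat (Poly_Mapping.lookup m v) * Poly_Mapping.lookup p m)) \<subseteq> Poly_Mapping.keys (m - Poly_Mapping.single v 1)"
      by (rule vars_single)
    also have "\<dots> \<subseteq> Poly_Mapping.keys m" by (rule keys_minus_nat)
    also have "\<dots> \<subseteq> vars p" using m by (auto simp: vars_def)
    finally show "vars (Poly_Mapping.single (m - Poly_Mapping.single v 1)
                              (of_nat (Poly_Mapping.lookup m v) * Poly_Mapping.lookup p m)) \<subseteq> vars p" .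
  qed
  finally show ?thesis .
qed

lemma vars_cst[simp]: "vars (cst c) = {}" by (simp add: cst_def vars_def)
lemma vars_one[simp]: "vars (1::fn) = {}" by (simp add: vars_def)
lemma vars_zero[simp]: "vars (0::fn) = {}" by (simp add: vars_def)
lemma vars_Var[simp]: "vars (Var v) = {v}" by (simp add: Var_def vars_def)

lemma vars_power: "vars (p ^ k) \<subseteq> vars (p::fn)"
proof (induction k)
  case (Suc k)
  then show ?case using vars_mult[of p "p^k"] by auto
qed simp

lemma vf_superset:
  assumes "finite A" "vars p \<subseteq> A"
  shows "vf g p = (\<Sum>v\<in>A. g v * pd v p)"
  unfolding vf_def
  by (rule sum.mono_neutral_left) (use assms in \<open>auto simp: pd_notin_vars\<close>)

lemma vf_add: "vf g (p + q) = vf g p + vf g q"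
proof -
  let ?A = "vars p \<union> vars q"
  have f: "finite ?A" by simp
  show ?thesis
    by (simp add: vf_superset[OF f] vf_superset[OF f vars_add] pd_add distrib_left sum.distrib)
qed

lemma vf_mult: "vf g (p * q) = vf g p * q + p * vf g q"
proof -
  let ?A = "vars p \<union> vars q"
  have f: "finite ?A" by simp
  have "vf g (p * q) = (\<Sum>v\<in>?A. g v * (pd v p * q + p * pd v q))"
    by (simp add: vf_superset[OF f vars_mult] pd_mult)
  also have "\<dots> = (\<Sum>v\<in>?A. g v * pd v p) * q + p * (\<Sum>v\<in>?A. g v * pd v q)"
    by (simp add: distrib_left sum.distrib sum_distrib_left sum_distrib_right mult.assoc mult.left_commute)
  also have "\<dots> = vf g p * q + p * vf g q"
    by (simp add: vf_superset[OF f])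
  finally show ?thesis .
qed

lemma vf_cst[simp]: "vf g (cst c) = 0" by (simp add: vf_def)

lemma pd_Var: "pd w (Var v) = (if w = v then 1 else 0)"
  by (auto simp: Var_def pd_single lookup_single)

lemma vf_Var[simp]: "vf g (Var v) = g v"
  by (simp add: vf_def pd_Var)

lemma vars_vf: "vars (vf g p) \<subseteq> vars p \<union> (\<Union>v\<in>vars p. vars (g v))"
proof -
  have "vars (vf g p) \<subseteq> (\<Union>v\<in>vars p. vars (g v * pd v p))" unfolding vf_def by (rule vars_sum)
  also have "\<dots> \<subseteq> vars p \<union> (\<Union>v\<in>vars p. vars (g v))"
  proof (rule UN_least)
    fix v assume v: "v \<in> vars p"
    have "vars (g v * pd v p) \<subseteq> vars (g v) \<union> vars (pd v p)" by (rule vars_mult)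
    also have "\<dots> \<subseteq> vars p \<union> (\<Union>v\<in>vars p. vars (g v))" using v vars_pd[of v p] by auto
    finally show "vars (g v * pd v p) \<subseteq> vars p \<union> (\<Union>v\<in>vars p. vars (g v))" .
  qed
  finally show ?thesis .
qed

lemma vf_cong: "(\<And>v. v \<in> vars p \<Longrightarrow> g v = h v) \<Longrightarrow> vf g p = vf h p"
  unfolding vf_def by (rule sum.cong) auto

lemma vf_zero_on: "(\<And>v. v \<in> vars p \<Longrightarrow> g v = 0) \<Longrightarrow> vf g p = 0"
  unfolding vf_def by (rule sum.neutral) auto



definition der :: "(fn \<Rightarrow> fn) \<Rightarrow> bool" where
  "der D \<longleftrightarrow> (\<forall>p q. D (p + q) = D p + D q) \<and> (\<forall>p q. D (p * q) = D p * q + p * D q) \<and> (\<forall>c. D (cst c) = 0)"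

lemma der_add: "der D \<Longrightarrow> D (p + q) = D p + D q" by (simp add: der_def)
lemma der_mult: "der D \<Longrightarrow> D (p * q) = D p * q + p * D q" by (simp add: der_def)
lemma der_cst: "der D \<Longrightarrow> D (cst c) = 0" by (simp add: der_def)

lemma cst_one: "cst 1 = 1" by (simp add: cst_def)
lemma cst_zero: "cst 0 = 0" by (simp add: cst_def)
lemma cst_add: "cst (a + b) = cst a + cst b" by (simp add: cst_def single_add)
lemma cst_mult: "cst (a * b) = cst a * cst b" by (simp add: cst_def mult_single)
lemma cst_uminus: "cst (- a) = - cst a" by (simp add: cst_def single_uminus)
lemma cst_diff: "cst (a - b) = cst a - cst b" by (simp add: cst_def single_diff)
lemma cst_of_int: "cst (of_int k) = of_int k" by (simp add: cst_def)
lemma cst_eq_0_iff: "cst c = 0 \<longleftrightarrow> c = 0"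
  by (metis cst_def lookup_single_eq single_zero lookup_zero)

lemma der_zero: "der D \<Longrightarrow> D 0 = 0"
  using der_add[of D 0 0] by simp
lemma der_uminus: "der D \<Longrightarrow> D (- p) = - D p"
  using der_add[of D p "-p"] der_zero[of D] by (simp add: eq_neg_iff_add_eq_0 add.commute)
lemma der_diff: "der D \<Longrightarrow> D (p - q) = D p - D q"
  using der_add[of D p "-q"] der_uminus[of D q] by simp
lemma der_one: "der D \<Longrightarrow> D 1 = 0"
  using der_cst[of D 1] by (simp add: cst_one)
lemma der_of_int: "der D \<Longrightarrow> D (of_int k) = 0"
  using der_cst[of D "of_int k"] by (simp add: cst_of_int)
lemma der_numeral: "der D \<Longrightarrow> D (numeral k) = 0"
  using der_of_int[of D "numeral k"] by simp
lemma der_sum: "der D \<Longrightarrow> D (sum f A) = (\<Sum>a\<in>A. D (f a))"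
  by (induction A rule: infinite_finite_induct) (auto simp: der_add der_zero)
lemma der_power: "der D \<Longrightarrow> D (p ^ Suc k) = of_nat (Suc k) * p ^ k * D p"
  by (induction k) (auto simp: der_mult algebra_simps)
lemma der_cst_mult: "der D \<Longrightarrow> D (cst c * p) = cst c * D p"
  by (simp add: der_mult der_cst)
lemma der_of_int_mult: "der D \<Longrightarrow> D (of_int k * p) = of_int k * D p"
  by (simp add: der_mult der_of_int)

lemma der_vf: "der (vf g)"
  by (simp add: der_def vf_add vf_mult)

lemma der_comm: assumes d1: "der D1" and d2: "der D2" shows "der (\<lambda>p. D1 (D2 p) - D2 (D1 p))"
  unfolding der_def
proof (intro conjI allI)
  fix p q
  show "D1 (D2 (p + q)) - D2 (D1 (p + q)) = D1 (D2 p) - D2 (D1 p) + (D1 (D2 q) - D2 (D1 q))"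
    by (simp add: der_add[OF d1] der_add[OF d2])
  show "D1 (D2 (p * q)) - D2 (D1 (p * q)) = (D1 (D2 p) - D2 (D1 p)) * q + p * (D1 (D2 q) - D2 (D1 q))"
    by (simp add: der_mult[OF d1] der_mult[OF d2] der_add[OF d1] der_add[OF d2] algebra_simps)
next
  fix c show "D1 (D2 (cst c)) - D2 (D1 (cst c)) = 0"
    by (simp add: der_cst[OF d1] der_cst[OF d2] der_zero[OF d1] der_zero[OF d2])
qed

lemma single_single_Var: "Poly_Mapping.single (Poly_Mapping.single v k) (1::rat) = Var v ^ k"
proof (induction k)
  case 0 then show ?case by simp
next
  case (Suc k)
  have "Poly_Mapping.single v (Suc k) = Poly_Mapping.single v 1 + Poly_Mapping.single v k"
    by (simp flip: single_add)
  then have "Poly_Mapping.single (Poly_Mapping.single v (Suc k)) (1::rat)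
     = Poly_Mapping.single (Poly_Mapping.single v 1) 1 * Poly_Mapping.single (Poly_Mapping.single v k) 1"
    by (simp add: mult_single)
  then show ?case using Suc by (simp add: Var_def)
qed

lemma single_sum_one: "finite A \<Longrightarrow> Poly_Mapping.single (\<Sum>v\<in>A. f v) (1::rat) = (\<Prod>v\<in>A. Poly_Mapping.single (f v) 1)"
proof (induction A rule: finite_induct)
  case (insert x F)
  then show ?case by (simp add: mult_single flip: insert.IH)
qed simp

lemma poly_induct[case_names cst Var add mult]:
  assumes c: "\<And>c. P (cst c)" and v: "\<And>v. P (Var v)"
    and a: "\<And>p q. P p \<Longrightarrow> P q \<Longrightarrow> P (p + q)" and m: "\<And>p q. P p \<Longrightarrow> P q \<Longrightarrow> P (p * q)"
  shows "P (p::fn)"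
proof -
  have one: "P 1" using c[of 1] by (simp add: cst_one)
  have pw: "P (Var v ^ k)" for v k
    by (induction k) (auto simp: one v m)
  have prod: "finite A \<Longrightarrow> P (\<Prod>v\<in>A. f v)" if "\<And>v. P (f v)" for A and f :: "coord \<Rightarrow> fn"
    by (induction A rule: finite_induct) (auto simp: one m that)
  have mon1: "P (Poly_Mapping.single mm 1)" for mm :: "coord \<Rightarrow>\<^sub>0 nat"
  proof -
    have "mm = (\<Sum>v\<in>Poly_Mapping.keys mm. Poly_Mapping.single v (Poly_Mapping.lookup mm v))"
      by (rule pm_sum_repr)
    then have "Poly_Mapping.single mm (1::rat) = (\<Prod>v\<in>Poly_Mapping.keys mm. Var v ^ Poly_Mapping.lookup mm v)"
      by (metis (no_types, lifting) finite_keys single_single_Var single_sum_one prod.cong)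
    then show ?thesis using prod[of "\<lambda>v. Var v ^ Poly_Mapping.lookup mm v"] pw by simp
  qed
  have mon: "P (Poly_Mapping.single mm cc)" for mm cc
  proof -
    have "Poly_Mapping.single mm cc = cst cc * Poly_Mapping.single mm 1"
      by (simp add: cst_def mult_single)
    then show ?thesis using m[OF c mon1] by simp
  qed
  have sm: "finite A \<Longrightarrow> P (\<Sum>k\<in>A. f k)" if "\<And>k. P (f k)" for A and f :: "_ \<Rightarrow> fn"
  proof (induction A rule: finite_induct)
    case empty then show ?case using c[of 0] by (simp add: cst_zero)
  qed (auto simp: a that)
  show ?thesis
    by (subst pm_sum_repr) (rule sm, rule mon, simp)
qed

lemma der_eq_vf: "der D \<Longrightarrow> D p = vf (\<lambda>v. D (Var v)) p"
proof (induction p rule: poly_induct)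
  case (cst c) then show ?case by (simp add: der_cst)
next
  case (Var v) then show ?case by simp
next
  case (add p q) then show ?case by (simp add: der_add vf_add)
next
  case (mult p q) then show ?case by (simp add: der_mult vf_mult)
qed

lemma der_ext: "der D1 \<Longrightarrow> der D2 \<Longrightarrow> (\<And>v. v \<in> vars p \<Longrightarrow> D1 (Var v) = D2 (Var v)) \<Longrightarrow> D1 p = D2 p"
  by (subst der_eq_vf[of D1], assumption, subst der_eq_vf[of D2], assumption) (rule vf_cong, auto)

lemma der_zero_on: "der D \<Longrightarrow> (\<And>v. v \<in> vars p \<Longrightarrow> D (Var v) = 0) \<Longrightarrow> D p = 0"
  by (subst der_eq_vf[of D], assumption) (rule vf_zero_on, auto)

lemma pd_vf: "pd w p = vf (\<lambda>v. if v = w then 1 else 0) p"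
proof (cases "w \<in> vars p")
  case True
  have "vf (\<lambda>v. if v = w then 1 else 0) p = (\<Sum>v\<in>vars p. if v = w then pd v p else 0)"
    unfolding vf_def by (rule sum.cong) auto
  then show ?thesis using True by (simp add: sum.delta')
next
  case False
  have "vf (\<lambda>v. if v = w then 1 else 0) p = 0" by (rule vf_zero_on) (use False in auto)
  then show ?thesis using False by (simp add: pd_notin_vars)
qed

lemma der_pd: "der (pd w)"
  by (simp add: pd_vf[abs_def] der_vf)



unbundle fps_syntax

lemma fls_mult_nth_bounds:
  fixes f g :: "'a::comm_ring_1 fls"
  assumes fa: "\<And>i. i < a \<Longrightarrow> f $$ i = 0" and gb: "\<And>i. i < b \<Longrightarrow> g $$ i = 0"
  shows "(f * g) $$ n = (\<Sum>i=a..n-b. f $$ i * g $$ (n - i))"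
proof (cases "f = 0 \<or> g = 0")
  case True
  then show ?thesis by auto
next
  case False
  then have f0: "f \<noteq> 0" and g0: "g \<noteq> 0" by auto
  have a: "a \<le> fls_subdegree f" using fls_subdegree_geI[OF f0] fa by blast
  have b: "b \<le> fls_subdegree g" using fls_subdegree_geI[OF g0] gb by blast
  have "(f * g) $$ n = (\<Sum>i=fls_subdegree f..n - fls_subdegree g. f $$ i * g $$ (n - i))"
    by (rule fls_times_nth(2))
  also have "\<dots> = (\<Sum>i=a..n-b. f $$ i * g $$ (n - i))"
  proof (rule sum.mono_neutral_left)
    show "{fls_subdegree f..n - fls_subdegree g} \<subseteq> {a..n - b}" using a b by auto
    show "\<forall>i\<in>{a..n - b} - {fls_subdegree f..n - fls_subdegree g}. f $$ i * g $$ (n - i) = 0"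
    proof
      fix i assume "i \<in> {a..n - b} - {fls_subdegree f..n - fls_subdegree g}"
      then have "i < fls_subdegree f \<or> n - i < fls_subdegree g" by auto
      then show "f $$ i * g $$ (n - i) = 0" by auto
    qed
  qed simp
  finally show ?thesis .
qed

section \<open>Coefficientwise extension of maps to Laurent series\<close>

definition ext :: "(fn \<Rightarrow> fn) \<Rightarrow> fn fls \<Rightarrow> fn fls" where
  "ext D F = Abs_fls (\<lambda>i. D (F $$ i))"

lemma ext_nth: assumes "D 0 = 0" shows "ext D F $$ i = D (F $$ i)"
proof -
  have "\<forall>\<^sub>\<infinity>n. D (F $$ (- int n)) = 0"
    using MOST_fls_neg_nth_eq_0[of F] by (rule MOST_mono) (simp add: assms)
  then show ?thesis unfolding ext_def by simp
qed

lemma der_ext_nth[simp]: "der D \<Longrightarrow> ext D F $$ i = D (F $$ i)"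
  by (simp add: ext_nth der_zero)

lemma ext_add: "der D \<Longrightarrow> ext D (F + G) = ext D F + ext D G"
  by (rule fls_eqI) (simp add: der_add)
lemma ext_uminus: "der D \<Longrightarrow> ext D (- F) = - ext D F"
  by (rule fls_eqI) (simp add: der_uminus)
lemma ext_diff: "der D \<Longrightarrow> ext D (F - G) = ext D F - ext D G"
  by (rule fls_eqI) (simp add: der_diff)
lemma ext_const: "der D \<Longrightarrow> ext D (fls_const c) = fls_const (D c)"
  by (rule fls_eqI) (simp add: der_zero)
lemma ext_zero_coeffs: "der D \<Longrightarrow> (\<And>i. D (F $$ i) = 0) \<Longrightarrow> ext D F = 0"
  by (rule fls_eqI) simp
lemma ext_one: "der D \<Longrightarrow> ext D 1 = 0"
  by (rule ext_zero_coeffs) (auto simp: der_zero der_one)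
lemma ext_of_int: "der D \<Longrightarrow> ext D (of_int k) = 0"
  by (rule ext_zero_coeffs) (auto simp: der_zero der_of_int fls_of_int_nth)
lemma ext_numeral: "der D \<Longrightarrow> ext D (numeral k) = 0"
  using ext_of_int[of D "numeral k"] by simp

lemma ext_mult: assumes d: "der D" shows "ext D (F * G) = ext D F * G + F * ext D G"
proof (rule fls_eqI)
  fix n
  obtain a where fa: "\<forall>i<a. F $$ i = 0" by (rule fls_nth_vanishes_belowE)
  obtain b where gb: "\<forall>i<b. G $$ i = 0" by (rule fls_nth_vanishes_belowE)
  have fa': "\<forall>i<a. ext D F $$ i = 0" using fa d by (simp add: der_zero)
  have gb': "\<forall>i<b. ext D G $$ i = 0" using gb d by (simp add: der_zero)
  have "ext D (F * G) $$ n = D (\<Sum>i=a..n-b. F $$ i * G $$ (n - i))"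
    using d fls_mult_nth_bounds[of a F b G n] fa gb by simp
  also have "\<dots> = (\<Sum>i=a..n-b. ext D F $$ i * G $$ (n - i)) + (\<Sum>i=a..n-b. F $$ i * ext D G $$ (n - i))"
    using d by (simp add: der_sum der_mult sum.distrib)
  also have "\<dots> = (ext D F * G + F * ext D G) $$ n"
    using fls_mult_nth_bounds[of a "ext D F" b G n] fls_mult_nth_bounds[of a F b "ext D G" n] fa gb fa' gb'
    by simp
  finally show "ext D (F * G) $$ n = (ext D F * G + F * ext D G) $$ n" .
qed

lemma ext_power: assumes d: "der D" shows "ext D (F ^ Suc k) = of_nat (Suc k) * F ^ k * ext D F"
  by (induction k) (auto simp: ext_mult[OF d] algebra_simps)

lemma ext_sq: assumes d: "der D" shows "ext D (F ^ 2) = 2 * F * ext D F"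
  using ext_power[OF d, of F 1] by (simp add: numeral_2_eq_2)

lemma ext_const_mult: "der D \<Longrightarrow> ext D (fls_const c * F) = fls_const (D c) * F + fls_const c * ext D F"
  by (simp add: ext_mult ext_const)

lemma ext_deriv: assumes d: "der D" shows "ext D (fls_deriv F) = fls_deriv (ext D F)"
  by (rule fls_eqI) (simp add: d der_mult der_add der_of_int der_one)

lemma ext_comp: "D2 0 = 0 \<Longrightarrow> D1 0 = 0 \<Longrightarrow> ext D1 (ext D2 F) = ext (\<lambda>p. D1 (D2 p)) F"
  by (rule fls_eqI) (simp add: ext_nth)

lemma ext_comm: "der D1 \<Longrightarrow> der D2 \<Longrightarrow>
   ext (\<lambda>p. D1 (D2 p) - D2 (D1 p)) F = ext D1 (ext D2 F) - ext D2 (ext D1 F)"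
  by (rule fls_eqI) (simp add: ext_nth der_zero)

lemma ext_X_intpow: "der D \<Longrightarrow> ext D (fls_X_intpow k) = 0"
  by (rule ext_zero_coeffs) (auto simp: der_zero der_one)

lemma ext_X_intpow_mult: "der D \<Longrightarrow> ext D (fls_X_intpow k * F) = fls_X_intpow k * ext D F"
  by (simp add: ext_mult ext_X_intpow)



unbundle fps_syntax

lemma phi_nth: "phi $$ i = (if i = -1 then 1 else if i < 0 then 0 else phic (nat i))"
  by (simp add: phi_def)

lemma phi_low: "i < -1 \<Longrightarrow> phi $$ i = 0"
  by (simp add: phi_nth)

lemma phi_m1[simp]: "phi $$ (-1) = 1"
  by (simp add: phi_nth)

definition ev :: "fn poly \<Rightarrow> fn fls" where
  "ev q = poly (map_poly fls_const q) phi"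

lemma ev_0[simp]: "ev 0 = 0" by (simp add: ev_def)

lemma ev_pCons: "ev (pCons a q) = fls_const a + phi * ev q"
  by (simp add: ev_def map_poly_pCons)

lemma ev_const: "ev [:c:] = fls_const c"
  by (simp add: ev_pCons)

lemma map_poly_fls_const_add: "map_poly fls_const (p + q) = map_poly fls_const p + map_poly fls_const (q :: fn poly)"
  by (rule poly_eqI) (simp add: coeff_map_poly fls_plus_const)

lemma ev_add: "ev (p + q) = ev p + ev q"
  by (simp add: ev_def map_poly_fls_const_add)

lemma ev_uminus: "ev (- p) = - ev p"
  using ev_add[of p "-p"] by (simp add: eq_neg_iff_add_eq_0 add.commute)

lemma ev_diff: "ev (p - q) = ev p - ev q"
  using ev_add[of p "-q"] ev_uminus[of q] by simp

lemma ev_smult: "ev (smult c q) = fls_const c * ev q"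
  by (simp add: ev_def map_poly_smult)

lemma ev_mult: "ev (p * q) = ev p * ev q"
proof (induction p)
  case 0 then show ?case by simp
next
  case (pCons a p)
  have "ev (pCons a p * q) = ev (smult a q + pCons 0 (p * q))" by simp
  also have "\<dots> = fls_const a * ev q + phi * (ev p * ev q)"
    by (simp only: ev_add ev_smult ev_pCons pCons.IH) simp
  also have "\<dots> = ev (pCons a p) * ev q" by (simp add: ev_pCons algebra_simps)
  finally show ?case .
qed

lemma ev_sum: "ev (sum f A) = (\<Sum>a\<in>A. ev (f a))"
  by (induction A rule: infinite_finite_induct) (auto simp: ev_add)

lemma ev_monom: "ev (monom c k) = fls_const c * phi ^ k"
  by (induction k) (simp_all add: monom_0 monom_Suc ev_const ev_pCons)

lemma ev_X: "ev [:0, 1:] = phi"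
  by (simp add: ev_pCons ev_const)

lemma ev_lead:
  assumes "q \<noteq> 0"
  shows "(\<forall>j < - int (degree q). ev q $$ j = 0) \<and> ev q $$ (- int (degree q)) = lead_coeff q"
  using assms
proof (induction q)
  case 0 then show ?case by simp
next
  case (pCons a p)
  show ?case
  proof (cases "p = 0")
    case True
    then show ?thesis by (simp add: ev_const)
  next
    case False
    then have IH: "\<forall>j < - int (degree p). ev p $$ j = 0" "ev p $$ (- int (degree p)) = lead_coeff p"
      using pCons.IH by auto
    have deg: "degree (pCons a p) = Suc (degree p)" using False by simp
    have prod: "(phi * ev p) $$ j = (\<Sum>i=-1..j + int (degree p). phi $$ i * ev p $$ (j - i))" for j
      using fls_mult_nth_bounds[of "-1" phi "- int (degree p)" "ev p" j] phi_low IH(1) by simp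
    have "ev (pCons a p) $$ j = 0" if "j < - int (Suc (degree p))" for j
      using that by (simp add: ev_pCons prod)
    moreover have "ev (pCons a p) $$ (- int (Suc (degree p))) = lead_coeff p"
      using IH(2) by (simp add: ev_pCons prod)
    ultimately show ?thesis using deg False by simp
  qed
qed

lemma ev_eq_0_nonpos: assumes "\<And>i. i \<le> 0 \<Longrightarrow> ev q $$ i = 0" shows "q = 0"
proof (rule ccontr)
  assume "q \<noteq> 0"
  then have "ev q $$ (- int (degree q)) = lead_coeff q" using ev_lead by blast
  moreover have "ev q $$ (- int (degree q)) = 0" using assms by simp
  ultimately show False using \<open>q \<noteq> 0\<close> by simp
qed

lemma ev_eq_const: assumes "\<And>i. i < 0 \<Longrightarrow> ev q $$ i = 0" shows "ev q = fls_const (coeff q 0)"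
proof (cases "q = 0")
  case True then show ?thesis by simp
next
  case False
  have "degree q = 0"
  proof (rule ccontr)
    assume "degree q \<noteq> 0"
    then have "ev q $$ (- int (degree q)) = 0" using assms by simp
    then show False using ev_lead[OF False] False by simp
  qed
  then have "q = [:coeff q 0:]" by (rule degree_0_id[symmetric])
  then show ?thesis by (metis ev_const)
qed

lemma ev_altdef: "ev q = (\<Sum>k\<le>degree q. fls_const (coeff q k) * phi ^ k)"
proof -
  have d: "degree (map_poly fls_const q) = degree q"
    by (rule degree_map_poly) simp
  show ?thesis unfolding ev_def poly_altdef d by (simp add: coeff_map_poly)
qed

lemma sum_phi_ev: "(\<Sum>k\<le>m. fls_const (c k) * phi ^ k) = ev (\<Sum>k\<le>m. monom (c k) k)"
  by (simp add: ev_sum ev_monom)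

lemma ext_ev: assumes d: "der D"
  shows "ext D (ev q) = ev (map_poly D q) + ev (pderiv q) * ext D phi"
proof (induction q)
  case 0 then show ?case using d by (simp add: ext_zero_coeffs der_zero)
next
  case (pCons a p)
  have "ext D (ev (pCons a p)) = fls_const (D a) + ext D phi * ev p + phi * ext D (ev p)"
    by (simp add: ev_pCons ext_add[OF d] ext_const[OF d] ext_mult[OF d])
  also have "\<dots> = ev (map_poly D (pCons a p)) + ev (pderiv (pCons a p)) * ext D phi"
    by (simp add: pCons.IH map_poly_pCons der_zero[OF d] ev_pCons pderiv_pCons ev_add algebra_simps)
  finally show ?case .
qed

lemma decomp_exists_aux: "(\<forall>i < - int N. F $$ i = 0) \<Longrightarrow> \<exists>q. \<forall>i\<le>0. (F - ev q) $$ i = 0"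
proof (induction N arbitrary: F)
  case 0
  show ?case
    by (rule exI[of _ "[:F $$ 0:]"]) (use 0 in \<open>auto simp: ev_const\<close>)
next
  case (Suc N)
  define c where "c = F $$ (- int (Suc N))"
  define F' where "F' = F - ev (monom c (Suc N))"
  have m: "monom (1::fn) (Suc N) \<noteq> 0" by simp
  have L: "\<forall>j < - int (Suc N). ev (monom 1 (Suc N)) $$ j = 0" "ev (monom (1::fn) (Suc N)) $$ (- int (Suc N)) = 1"
    using ev_lead[OF m] by (simp_all add: degree_monom_eq)
  have em: "ev (monom c (Suc N)) = fls_const c * ev (monom 1 (Suc N))"
    by (simp add: ev_monom)
  have "\<forall>i < - int N. F' $$ i = 0"
  proof (intro allI impI)
    fix i assume i: "i < - int N"
    show "F' $$ i = 0"
    proof (cases "i = - int (Suc N)")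
      case True
      then have "F' $$ i = F $$ i - c" using L by (simp add: F'_def em)
      with True show ?thesis by (simp add: c_def)
    next
      case False
      then have "i < - int (Suc N)" using i by simp
      then show ?thesis using L Suc.prems by (simp add: F'_def em)
    qed
  qed
  then obtain q where q: "\<forall>i\<le>0. (F' - ev q) $$ i = 0" using Suc.IH by blast
  show ?case
    by (rule exI[of _ "q + monom c (Suc N)"]) (use q in \<open>simp add: F'_def ev_add algebra_simps\<close>)
qed

lemma decomp_exists: "\<exists>q. \<forall>i\<le>0. (F - ev q) $$ i = 0"
proof -
  obtain N :: int where N: "\<forall>n<N. F $$ n = 0" by (rule fls_nth_vanishes_belowE)
  have "\<forall>i < - int (nat (-N)). F $$ i = 0" using N by auto
  then show ?thesis by (rule decomp_exists_aux)
qed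

lemma Pphi_eq:
  assumes G: "\<And>i. i \<le> 0 \<Longrightarrow> G $$ i = 0" and F: "F = G + ev q"
  shows "Pphi F = G"
  unfolding Pphi_def
proof (rule the_equality)
  have e: "F = G + (\<Sum>k\<le>degree q. fls_const (coeff q k) * phi ^ k)" using F ev_altdef[of q] by simp
  show "(\<forall>i\<le>0. G $$ i = 0) \<and> (\<exists>c m. F = G + (\<Sum>k\<le>m. fls_const (c k) * phi ^ k))"
  proof (intro conjI allI impI)
    fix i :: int assume "i \<le> 0" then show "G $$ i = 0" by (rule G)
  next
    show "\<exists>c m. F = G + (\<Sum>k\<le>m. fls_const (c k) * phi ^ k)" using e by blast
  qed
next
  fix G' assume "(\<forall>i\<le>0. G' $$ i = 0) \<and> (\<exists>(c::nat \<Rightarrow> fn) m. F = G' + (\<Sum>k\<le>m. fls_const (c k) * phi ^ k))"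
  then obtain c m where G': "\<forall>i\<le>0. G' $$ i = 0" and F': "F = G' + ev (\<Sum>k\<le>m. monom (c k) k)"
    by (auto simp: sum_phi_ev)
  have "ev (q - (\<Sum>k\<le>m. monom (c k) k)) = G' - G" using F F' by (simp add: ev_diff algebra_simps)
  then have "q - (\<Sum>k\<le>m. monom (c k) k) = 0"
    by (intro ev_eq_0_nonpos) (simp add: G G')
  then show "G' = G" using F F' by simp
qed



unbundle fps_syntax

abbreviation "zz \<equiv> Var (ZC 0 False)"
abbreviation "zx \<equiv> Var (ZC 1 False)"
abbreviation "zy \<equiv> Var (ZC 0 True)"
abbreviation "zxx \<equiv> Var (ZC 2 False)"
abbreviation "zxy \<equiv> Var (ZC 1 True)"
abbreviation "vx \<equiv> Var XC"
abbreviation "vy \<equiv> Var YC"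

lemma der_Dtx: "der (Dtx ax)" by (simp add: Dtx_def der_vf)
lemma der_Dty: "der (Dty ay)" by (simp add: Dty_def der_vf)
lemma der_Dx_eq: "der Dx_eq" by (simp add: Dx_eq_def der_vf)
lemma der_S: "der (Sfield n)" by (simp add: Sfield_def der_vf)
lemma der_tDx: "der tDx" by (simp add: tDx_def der_Dtx)
lemma der_tDy: "der tDy" by (simp add: tDy_def der_Dty)

lemma Dtx_Var[simp]:
  "Dtx ax (Var XC) = 1" "Dtx ax (Var YC) = 0" "Dtx ax (Var (ZC a b)) = Var (ZC (Suc a) b)"
  "Dtx ax (Var (PhiC j)) = ax j"
  by (simp_all add: Dtx_def)

lemma Dty_Var[simp]:
  "Dty ay (Var XC) = 0" "Dty ay (Var YC) = 1" "Dty ay (Var (ZC a False)) = Var (ZC a True)"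
  "Dty ay (Var (ZC a True)) = (Dx_eq ^^ a) zyy"
  "Dty ay (Var (PhiC j)) = ay j"
  by (simp_all add: Dty_def)

lemma Dx_eq_Var[simp]:
  "Dx_eq (Var XC) = 1" "Dx_eq (Var YC) = 0" "Dx_eq (Var (ZC a b)) = Var (ZC (Suc a) b)"
  "Dx_eq (Var (PhiC j)) = 0"
  by (simp_all add: Dx_eq_def)

lemma S_Var[simp]:
  "Sfield n (Var XC) = 0" "Sfield n (Var YC) = 0"
  "Sfield n (Var (ZC a b)) = (tDx ^^ a) ((tDy ^^ (if b then 1 else 0)) (Zgen n))"
  "Sfield n (Var (PhiC j)) = PhiS n j"
  by (simp_all add: Sfield_def)

lemma tDx_Var[simp]:
  "tDx (Var XC) = 1" "tDx (Var YC) = 0" "tDx (Var (ZC a b)) = Var (ZC (Suc a) b)"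
  "tDx (Var (PhiC j)) = phix j"
  by (simp_all add: tDx_def)

lemma tDy_Var[simp]:
  "tDy (Var XC) = 0" "tDy (Var YC) = 1" "tDy (Var (ZC a False)) = Var (ZC a True)"
  "tDy (Var (ZC a True)) = (Dx_eq ^^ a) zyy"
  "tDy (Var (PhiC j)) = phiy j"
  by (simp_all add: tDy_def)

lemma der_power2: "der D \<Longrightarrow> D (p ^ 2) = 2 * p * D p"
  using der_power[of D p 1] by (simp add: numeral_2_eq_2)

lemma cst_half: "cst (1/2) * 2 = (1::fn)"
proof -
  have "cst (1/2) * 2 = Poly_Mapping.single 0 (1/2) * Poly_Mapping.single 0 (2::rat)"
    by (simp add: cst_def)
  also have "\<dots> = 1" by (simp only: mult_single) simp
  finally show ?thesis .
qed

lemma cst_half': "cst (1/2) * (2 * p) = (p::fn)"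
  using cst_half by (simp add: mult.assoc[symmetric])

lemmas der_simps = der_add der_mult der_diff der_uminus der_cst der_power2 der_zero der_one der_numeral

lemma phic_simps:
  "phic 0 = 0" "phic 1 = - vy" "phic (Suc 0) = - vy" "phic 2 = - vx" "phic 3 = - zz - cst (1/2) * vy ^ 2"
  "phic (Suc (Suc (Suc (Suc j)))) = Var (PhiC j)"
  by (simp_all add: phic_def)

lemma dser_nth: "der D \<Longrightarrow> dser D $$ i = (if i \<le> 0 then 0 else D (phic (nat i)))"
  by (simp add: dser_def)

lemma ext_phi: assumes d: "der D" shows "ext D phi = dser D"
proof (rule fls_eqI)
  fix i
  show "ext D phi $$ i = dser D $$ i"
    using d by (cases "i = 0") (auto simp: phi_nth dser_nth der_zero der_one phic_simps)
qed

definition Qp :: "fn poly" where "Qp = [:- zy, - zx, 1:]"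

lemma Qphi_ev: "Qphi = ev Qp"
  by (simp add: Qphi_def Qp_def ev_pCons ev_const algebra_simps power2_eq_square)

lemma Qp_deg: "degree Qp = 2" by (simp add: Qp_def)
lemma Qp_nz: "Qp \<noteq> 0" by (simp add: Qp_def)

lemma Q_low: "j < -2 \<Longrightarrow> Qphi $$ j = 0"
  using ev_lead[OF Qp_nz] by (simp add: Qp_deg Qphi_ev)

lemma Q_m2: "Qphi $$ (-2) = 1"
  using ev_lead[OF Qp_nz] by (simp add: Qp_deg Qphi_ev Qp_def)

lemma Q_nz: "Qphi \<noteq> 0"
  using Q_m2 by (auto)

lemma Q_subdeg: "fls_subdegree Qphi = -2"
  by (rule fls_subdegree_eqI) (simp_all add: Q_m2 Q_low)

lemma Q_cancel: "Qphi * X = Qphi * Y \<Longrightarrow> X = Y"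
  using Q_nz by simp

lemma phi_phi_nth: "(phi * phi) $$ n = (\<Sum>i=-1..n+1. phi $$ i * phi $$ (n - i))"
  using fls_mult_nth_bounds[of "-1" phi "-1" phi n] phi_low by simp

lemma Q_m1: "Qphi $$ (-1) = - zx"
proof -
  have "{-1..0::int} = {-1, 0}" by auto
  then have "(phi * phi) $$ (-1) = 0" by (simp add: phi_phi_nth phi_nth phic_simps)
  then show ?thesis by (simp add: Qphi_def power2_eq_square phi_nth)
qed

lemma Q_0: "Qphi $$ 0 = 2 * phic 1 - zy"
proof -
  have "{-1..1::int} = {-1, 0, 1}" by auto
  then have "(phi * phi) $$ 0 = 2 * phic 1" by (simp add: phi_phi_nth phi_nth phic_simps)
  then show ?thesis by (simp add: Qphi_def power2_eq_square phi_nth phic_simps)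
qed

section \<open>Existence of phix and phiy\<close>

definition AA :: "fn fls" where "AA = - fls_right_inverse Qphi 1"

lemma QA: "Qphi * AA = -1"
  using fls_right_inverse[of Qphi 1] by (simp add: AA_def Q_subdeg Q_m2)

lemma AA_nz: "AA \<noteq> 0" using QA by auto

lemma AA_low: "i < 2 \<Longrightarrow> AA $$ i = 0"
proof -
  have "fls_subdegree (Qphi * AA) = 0" using QA by simp
  then have "fls_subdegree AA = 2" using Q_nz AA_nz Q_subdeg by simp
  then show "i < 2 \<Longrightarrow> AA $$ i = 0" by auto
qed

lemma QA_nth: "(Qphi * AA) $$ n = (\<Sum>i=-2..n-2. Qphi $$ i * AA $$ (n - i))"
  using fls_mult_nth_bounds[of "-2" Qphi 2 AA n] Q_low AA_low by simp

lemma AA_2: "AA $$ 2 = -1"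
proof -
  have "(Qphi * AA) $$ 0 = -1" using QA by simp
  then show ?thesis by (simp add: QA_nth Q_m2)
qed

lemma AA_3: "AA $$ 3 = - zx"
proof -
  have s: "{-2..-1::int} = {-2, -1}" by auto
  have "(Qphi * AA) $$ 1 = 0" using QA by simp
  then have "AA $$ 3 + zx = 0" by (simp add: QA_nth s Q_m2 Q_m1 AA_2)
  then show ?thesis by (simp add: eq_neg_iff_add_eq_0)
qed

lemma AA_4: "AA $$ 4 = - zx * zx - 2 * vy - zy"
proof -
  have s: "{-2..0::int} = {-2, -1, 0}" by auto
  have "(Qphi * AA) $$ 2 = 0" using QA by simp
  then have h: "AA $$ 4 + zx * zx - (2 * phic 1 - zy) = 0"
    by (simp add: QA_nth s Q_m2 Q_m1 Q_0 AA_2 AA_3 algebra_simps)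
  have "AA $$ 4 - (- zx * zx - 2 * vy - zy) = AA $$ 4 + zx * zx - (2 * phic 1 - zy)"
    by (simp add: phic_simps algebra_simps)
  from trans[OF this h] show ?thesis using eq_iff_diff_eq_0 by blast
qed

definition BB :: "fn fls" where "BB = (phi - fls_const zx) * AA"

lemma QB: "Qphi * BB = - (phi - fls_const zx)"
  by (simp add: BB_def mult.left_commute[of Qphi] QA)

lemma BB_nth: "BB $$ n = (\<Sum>i=-1..n-2. (phi - fls_const zx) $$ i * AA $$ (n - i))"
  unfolding BB_def by (rule fls_mult_nth_bounds) (auto simp: phi_low AA_low)

lemma BB_low: "i \<le> 0 \<Longrightarrow> BB $$ i = 0"
  by (simp add: BB_nth)

lemma BB_1: "BB $$ 1 = -1"
  by (simp add: BB_nth AA_2)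

lemma BB_2: "BB $$ 2 = 0"
proof -
  have s: "{-1..0::int} = {-1, 0}" by auto
  show ?thesis by (simp add: BB_nth s AA_2 AA_3 phi_nth phic_simps)
qed

lemma BB_3: "BB $$ 3 = - vy - zy"
proof -
  have s: "{-1..1::int} = {-1, 0, 1}" by auto
  show ?thesis by (simp add: BB_nth s AA_2 AA_3 AA_4 phi_nth phic_simps algebra_simps)
qed

lemma dser_PhiC: "der D \<Longrightarrow> dser D $$ (int j + 4) = D (Var (PhiC j))"
proof -
  assume "der D"
  moreover have "nat (int j + 4) = Suc (Suc (Suc (Suc j)))" by simp
  ultimately show ?thesis by (simp add: dser_nth phic_simps)
qed

lemma dser_Dtx_AA: "dser (Dtx (\<lambda>j. AA $$ (int j + 4))) = AA"
proof (rule fls_eqI)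
  fix i :: int
  have d: "der (Dtx (\<lambda>j. AA $$ (int j + 4)))" by (rule der_Dtx)
  show "dser (Dtx (\<lambda>j. AA $$ (int j + 4))) $$ i = AA $$ i"
  proof (cases "i \<le> 3")
    case True
    then have "i \<le> 0 \<or> i = 1 \<or> i = 2 \<or> i = 3" by auto
    then show ?thesis using d
      by (elim disjE) (auto simp: dser_nth[OF d] AA_low AA_2 AA_3 phic_simps der_simps[OF d])
  next
    case False
    define j where "j = nat (i - 4)"
    have j: "i = int j + 4" using False by (simp add: j_def)
    show ?thesis using d by (simp add: j dser_PhiC)
  qed
qed

lemma dser_Dty_BB: "dser (Dty (\<lambda>j. BB $$ (int j + 4))) = BB"
proof (rule fls_eqI)
  fix i :: int
  have d: "der (Dty (\<lambda>j. BB $$ (int j + 4)))" by (rule der_Dty)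
  show "dser (Dty (\<lambda>j. BB $$ (int j + 4))) $$ i = BB $$ i"
  proof (cases "i \<le> 3")
    case True
    then have "i \<le> 0 \<or> i = 1 \<or> i = 2 \<or> i = 3" by auto
    then show ?thesis using d
      by (elim disjE) (auto simp: dser_nth[OF d] BB_low BB_1 BB_2 BB_3 phic_simps der_simps[OF d] cst_half')
  next
    case False
    define j where "j = nat (i - 4)"
    have j: "i = int j + 4" using False by (simp add: j_def)
    show ?thesis using d by (simp add: j dser_PhiC)
  qed
qed

lemma dser_inj_x: "dser (Dtx a1) = dser (Dtx a2) \<Longrightarrow> a1 = a2"
proof
  fix j assume "dser (Dtx a1) = dser (Dtx a2)"
  then have "dser (Dtx a1) $$ (int j + 4) = dser (Dtx a2) $$ (int j + 4)" by simp
  then show "a1 j = a2 j" by (simp add: dser_PhiC der_Dtx)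
qed

lemma dser_inj_y: "dser (Dty a1) = dser (Dty a2) \<Longrightarrow> a1 = a2"
proof
  fix j assume "dser (Dty a1) = dser (Dty a2)"
  then have "dser (Dty a1) $$ (int j + 4) = dser (Dty a2) $$ (int j + 4)" by simp
  then show "a1 j = a2 j" by (simp add: dser_PhiC der_Dty)
qed

lemma phix_eq: "phix = (\<lambda>j. AA $$ (int j + 4))"
  unfolding phix_def
proof (rule the_equality)
  show "Qphi * dser (Dtx (\<lambda>j. AA $$ (int j + 4))) = - 1" by (simp add: dser_Dtx_AA QA)
next
  fix ax assume "Qphi * dser (Dtx ax) = - 1"
  have "dser (Dtx ax) = dser (Dtx (\<lambda>j. AA $$ (int j + 4)))"
    by (rule Q_cancel) (simp add: dser_Dtx_AA QA \<open>Qphi * dser (Dtx ax) = - 1\<close>)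
  then show "ax = (\<lambda>j. AA $$ (int j + 4))" by (rule dser_inj_x)
qed

lemma phiy_eq: "phiy = (\<lambda>j. BB $$ (int j + 4))"
  unfolding phiy_def
proof (rule the_equality)
  show "Qphi * dser (Dty (\<lambda>j. BB $$ (int j + 4))) = - (phi - fls_const zx)" by (simp add: dser_Dty_BB QB)
next
  fix ay assume "Qphi * dser (Dty ay) = - (phi - fls_const zx)"
  have "dser (Dty ay) = dser (Dty (\<lambda>j. BB $$ (int j + 4)))"
    by (rule Q_cancel) (simp add: dser_Dty_BB QB \<open>Qphi * dser (Dty ay) = - (phi - fls_const zx)\<close>)
  then show "ay = (\<lambda>j. BB $$ (int j + 4))" by (rule dser_inj_y)
qed

definition PP :: "fn fls" where "PP = ext tDx phi"
definition RR :: "fn fls" where "RR = ext tDy phi"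

lemma PP_eq: "PP = AA"
  by (simp add: PP_def ext_phi der_Dtx tDx_def phix_eq dser_Dtx_AA)
lemma RR_eq: "RR = BB"
  by (simp add: RR_def ext_phi der_Dty tDy_def phiy_eq dser_Dty_BB)

lemma QP: "Qphi * PP = -1" by (simp add: PP_eq QA)
lemma QR: "Qphi * RR = - (phi - fls_const zx)" by (simp add: RR_eq QB)
lemma RP: "RR = (phi - fls_const zx) * PP" by (simp add: RR_eq PP_eq BB_def)



unbundle fps_syntax

section \<open>tDx and tDy commute\<close>

definition nophi :: "fn \<Rightarrow> bool" where "nophi p \<longleftrightarrow> (\<forall>j. PhiC j \<notin> vars p)"

lemma nophi_add: "nophi p \<Longrightarrow> nophi q \<Longrightarrow> nophi (p + q)"
  unfolding nophi_def using vars_add by blast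
lemma nophi_diff: "nophi p \<Longrightarrow> nophi q \<Longrightarrow> nophi (p - q)"
  unfolding nophi_def using vars_diff by blast
lemma nophi_mult: "nophi p \<Longrightarrow> nophi q \<Longrightarrow> nophi (p * q)"
  unfolding nophi_def using vars_mult by blast
lemma nophi_one: "nophi 1" by (simp add: nophi_def)
lemma nophi_zero: "nophi 0" by (simp add: nophi_def)
lemma nophi_ZC: "nophi (Var (ZC a b))" by (simp add: nophi_def)
lemma nophi_XC: "nophi (Var XC)" by (simp add: nophi_def)
lemma nophi_YC: "nophi (Var YC)" by (simp add: nophi_def)

lemma nophi_zyy: "nophi zyy"
  unfolding zyy_def by (intro nophi_diff nophi_mult nophi_ZC nophi_one)

lemma nophi_Dx_eq: assumes "nophi p" shows "nophi (Dx_eq p)"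
proof -
  let ?g = "\<lambda>v. case v of XC \<Rightarrow> 1 | YC \<Rightarrow> 0 | ZC a b \<Rightarrow> Var (ZC (Suc a) b) | PhiC j \<Rightarrow> (0::fn)"
  have "vars (vf ?g p) \<subseteq> vars p \<union> (\<Union>v\<in>vars p. vars (?g v))" by (rule vars_vf)
  moreover have "PhiC j \<notin> vars (?g v)" for j v by (cases v) auto
  ultimately show ?thesis using assms unfolding nophi_def Dx_eq_def by blast
qed

lemma nophi_Dx_eq_pow: "nophi ((Dx_eq ^^ a) zyy)"
  by (induction a) (auto simp: nophi_zyy nophi_Dx_eq)

lemma tDx_Dx_eq: assumes "nophi p" shows "tDx p = Dx_eq p"
proof (rule der_ext[OF der_tDx der_Dx_eq])
  fix v assume v: "v \<in> vars p"
  show "tDx (Var v) = Dx_eq (Var v)"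
  proof (cases v)
    case (PhiC j) then show ?thesis using v assms by (simp add: nophi_def)
  qed simp_all
qed

lemma F1_alg:
  fixes Q P R ph a b c d e :: "'a::comm_ring_1"
  assumes "Q = ph^2 - a*ph - b" "Q*P = -1" "R = (ph - a)*P" "e = b*c - a*d - 1"
  shows "-(P - c) - (2*ph*P - c*ph - a*P - d)*R = -((2*ph*R - d*ph - a*R - e)*P)"
proof -
  have "-(P - c) - (2*ph*P - c*ph - a*P - d)*((ph - a)*P) + ((2*ph*((ph - a)*P) - d*ph - a*((ph - a)*P) - (b*c - a*d - 1))*P)
      = c * ((ph^2 - a*ph - b)*P + 1)" by (simp add: algebra_simps power2_eq_square)
  then have "-(P - c) - (2*ph*P - c*ph - a*P - d)*R + ((2*ph*R - d*ph - a*R - e)*P) = 0"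
    using assms by simp
  then show ?thesis by (simp add: eq_neg_iff_add_eq_0)
qed

lemma ext_Q: assumes d: "der D"
  shows "ext D Qphi = 2 * phi * ext D phi - fls_const (D zx) * phi - fls_const zx * ext D phi - fls_const (D zy)"
  by (simp only: Qphi_def ext_diff[OF d] ext_sq[OF d] ext_mult[OF d] ext_const[OF d]) (simp add: algebra_simps)

lemma tD_z: "tDx zx = zxx" "tDx zy = zxy" "tDy zx = zxy" "tDy zy = zyy"
  by (simp_all add: numeral_2_eq_2)

lemma ext_neg_one: "der D \<Longrightarrow> ext D (-1) = 0"
  by (simp add: ext_uminus ext_one)

lemma zyy_expand: "fls_const zyy = fls_const zy * fls_const zxx - fls_const zx * fls_const zxy - 1"
  by (simp only: zyy_def fls_const_mult_const fls_const_1[symmetric] fls_minus_const)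

lemma series_F1: "ext tDx RR = ext tDy PP"
proof (rule Q_cancel)
  have hy: "ext tDy Qphi * PP + Qphi * ext tDy PP = 0"
    using arg_cong[OF QP, of "ext tDy"] by (simp add: ext_mult[OF der_tDy] ext_neg_one[OF der_tDy])
  have hx0: "ext tDx (Qphi * RR) = ext tDx (- (phi - fls_const zx))" by (simp only: QR)
  have hx: "ext tDx Qphi * RR + Qphi * ext tDx RR = - (PP - fls_const zxx)"
    using hx0 by (simp only: ext_mult[OF der_tDx] ext_uminus[OF der_tDx] ext_diff[OF der_tDx]
         ext_const[OF der_tDx] tD_z PP_def[symmetric])
  have X1: "ext tDx Qphi = 2 * phi * PP - fls_const zxx * phi - fls_const zx * PP - fls_const zxy"
    by (simp only: ext_Q[OF der_tDx] PP_def[symmetric] tD_z)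
  have Y1: "ext tDy Qphi = 2 * phi * RR - fls_const zxy * phi - fls_const zx * RR - fls_const zyy"
    by (simp only: ext_Q[OF der_tDy] RR_def[symmetric] tD_z)
  have Qd: "Qphi = phi^2 - fls_const zx * phi - fls_const zy" by (simp add: Qphi_def)
  have hy': "Qphi * ext tDy PP = - (ext tDy Qphi * PP)" using hy by (simp add: eq_neg_iff_add_eq_0 add.commute)
  have "Qphi * ext tDx RR = -(PP - fls_const zxx) - ext tDx Qphi * RR" using hx by (simp add: eq_diff_eq add.commute)
  also have "\<dots> = - (ext tDy Qphi * PP)"
    unfolding X1 Y1 by (rule F1_alg[OF Qd QP RP zyy_expand])
  also have "\<dots> = Qphi * ext tDy PP" using hy' by simp
  finally show "Qphi * ext tDx RR = Qphi * ext tDy PP" .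
qed

lemma RR_PhiC: "RR $$ (int j + 4) = phiy j"
  by (simp add: RR_def ext_phi[OF der_tDy] dser_PhiC[OF der_tDy])
lemma PP_PhiC: "PP $$ (int j + 4) = phix j"
  by (simp add: PP_def ext_phi[OF der_tDx] dser_PhiC[OF der_tDx])

lemma comm_xy: "tDx (tDy p) = tDy (tDx p)"
proof -
  let ?C = "\<lambda>p. tDx (tDy p) - tDy (tDx p)"
  have d: "der ?C" by (rule der_comm[OF der_tDx der_tDy])
  have "?C p = 0"
  proof (rule der_zero_on[OF d])
    fix v
    show "?C (Var v) = 0"
    proof (cases v)
      case (ZC a b)
      show ?thesis
      proof (cases b)
        case True
        have "tDx ((Dx_eq ^^ a) zyy) = Dx_eq ((Dx_eq ^^ a) zyy)"
          by (rule tDx_Dx_eq[OF nophi_Dx_eq_pow])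
        then show ?thesis using ZC True by simp
      qed (use ZC in simp)
    next
      case (PhiC j)
      have "ext tDx RR $$ (int j + 4) = ext tDy PP $$ (int j + 4)" by (simp add: series_F1)
      then show ?thesis using PhiC by (simp add: der_tDx der_tDy RR_PhiC PP_PhiC)
    qed (simp_all add: der_zero[OF der_tDx] der_zero[OF der_tDy] der_one[OF der_tDx] der_one[OF der_tDy])
  qed
  then show ?thesis by simp
qed



unbundle fps_syntax

lemma Wx_alg:
 fixes Q P R ph ph' Xn a b c d e Zx Zy f1 f2 Df1 Df2 E E' DE SP DP DyP P' Psi SQ W DPsi DH :: "fn fls"
 assumes Q: "Q = ph^2 - a*ph - b" and QP: "Q*P = -1" and R: "R = (ph - a)*P"
  and Psi: "Psi = Xn*ph' - E + f2*P + f1*R"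
  and SQ: "SQ = 2*ph*Psi - Zx*ph - a*Psi - Zy" and hS: "SQ*P + Q*SP = 0"
  and DPsi: "DPsi = DH - (DE + E'*P) + Df2*P + f2*DP + Df1*R + f1*DyP"
  and DH: "DH = Xn * P'"
  and dQP: "(2*ph*ph' - a*ph')*P + Q*P' = 0"
  and hX: "(2*ph*P - c*ph - a*P - d)*P + Q*DP = 0"
  and hY: "(2*ph*R - d*ph - a*R - e)*P + Q*DyP = 0"
  and W: "W = SP - DPsi"
 shows "Q*Q*W = -((2*ph - a)*E) - (Zy + ph*Zx) + Q*Q*DE - Q*E' + Df2*Q + Df1*Q*(ph - a) + (f2*d + f1*e) + ph*(f2*c + f1*d)"
  using assms by algebra

lemma Wy_alg:
 fixes Q P R ph ph' Xn a b c d e Zx Zy f1 f2 Df1 Df2 E E' DE SR DyP DyR R' Psi SQ W DPsi DH :: "fn fls"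
 assumes Q: "Q = ph^2 - a*ph - b" and QP: "Q*P = -1" and R: "R = (ph - a)*P"
  and Psi: "Psi = Xn*ph' - E + f2*P + f1*R"
  and SQ: "SQ = 2*ph*Psi - Zx*ph - a*Psi - Zy" and hS: "SQ*R + Q*SR = -(Psi - Zx)"
  and DPsi: "DPsi = DH - (DE + E'*R) + Df2*P + f2*DyP + Df1*R + f1*DyR"
  and DH: "DH = Xn * R'"
  and dQR: "(2*ph*ph' - a*ph')*R + Q*R' = - ph'"
  and hY: "(2*ph*R - d*ph - a*R - e)*P + Q*DyP = 0"
  and hYR: "(2*ph*R - d*ph - a*R - e)*R + Q*DyR = -(R - d)"
  and W: "W = SR - DPsi"
 shows "Q*Q*W = Q*E - (2*ph-a)*(ph-a)*E + Q*Zx - (Zx*ph + Zy)*(ph - a) + Q*Q*DE - E'*Q*(ph - a) + Df2*Q + Df1*Q*(ph-a) + f2 + f2*(d*ph + e) - f1*Q*d + f1*(ph - a)*(d*ph + e)"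
  using assms by algebra

lemma Qd: "Qphi = phi^2 - fls_const zx * phi - fls_const zy" by (simp add: Qphi_def)

lemma X1_eq: "ext tDx Qphi = 2 * phi * PP - fls_const zxx * phi - fls_const zx * PP - fls_const zxy"
  by (simp only: ext_Q[OF der_tDx] PP_def[symmetric] tD_z)
lemma Y1_eq: "ext tDy Qphi = 2 * phi * RR - fls_const zxy * phi - fls_const zx * RR - fls_const zyy"
  by (simp only: ext_Q[OF der_tDy] RR_def[symmetric] tD_z)

lemma hxP: "ext tDx Qphi * PP + Qphi * ext tDx PP = 0"
  using arg_cong[OF QP, of "ext tDx"] by (simp add: ext_mult[OF der_tDx] ext_neg_one[OF der_tDx])
lemma hyP: "ext tDy Qphi * PP + Qphi * ext tDy PP = 0"
  using arg_cong[OF QP, of "ext tDy"] by (simp add: ext_mult[OF der_tDy] ext_neg_one[OF der_tDy])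
lemma hyR: "ext tDy Qphi * RR + Qphi * ext tDy RR = - (RR - fls_const zxy)"
proof -
  have h0: "ext tDy (Qphi * RR) = ext tDy (- (phi - fls_const zx))" by (simp only: QR)
  show ?thesis
    using h0 by (simp only: ext_mult[OF der_tDy] ext_uminus[OF der_tDy] ext_diff[OF der_tDy]
         ext_const[OF der_tDy] tD_z RR_def[symmetric])
qed

lemma deriv_Q: "fls_deriv Qphi = 2 * phi * fls_deriv phi - fls_const zx * fls_deriv phi"
  by (simp add: Qphi_def power2_eq_square algebra_simps)

lemma dQP: "(2 * phi * fls_deriv phi - fls_const zx * fls_deriv phi) * PP + Qphi * fls_deriv PP = 0"
proof -
  have "fls_deriv (Qphi * PP) = 0" by (simp add: QP)
  then show ?thesis by (simp add: deriv_Q algebra_simps)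
qed

lemma dQR: "(2 * phi * fls_deriv phi - fls_const zx * fls_deriv phi) * RR + Qphi * fls_deriv RR = - fls_deriv phi"
proof -
  have "fls_deriv (Qphi * RR) = - fls_deriv phi" by (simp add: QR)
  then show ?thesis by (simp add: deriv_Q algebra_simps)
qed

definition H0 :: "int \<Rightarrow> fn fls" where "H0 n = fls_X_intpow n * fls_deriv phi"
definition qn :: "int \<Rightarrow> fn poly" where "qn n = (SOME q. \<forall>i\<le>0. (H0 n - ev q) $$ i = 0)"
definition fF :: "int \<Rightarrow> fn fls" where "fF n = H0 n - ev (qn n)"

lemma fF_low: "i \<le> 0 \<Longrightarrow> fF n $$ i = 0"
  using someI_ex[OF decomp_exists[of "H0 n"]] unfolding fF_def qn_def by blast

lemma fco_eq: "fco n i = fF n $$ int i"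
proof -
  have h: "H0 n = fF n + ev (qn n)" by (simp add: fF_def)
  have "Pphi (H0 n) = fF n"
    by (rule Pphi_eq[OF fF_low h])
  then show ?thesis by (simp add: fco_def H0_def)
qed

lemma ext_H0: "der D \<Longrightarrow> ext D (H0 n) = fls_X_intpow n * fls_deriv (ext D phi)"
  by (simp add: H0_def ext_X_intpow_mult ext_deriv)

lemma PP_nth: "PP $$ i = (if i \<le> 0 then 0 else tDx (phic (nat i)))"
  by (simp add: PP_def ext_phi[OF der_tDx] dser_nth[OF der_tDx])
lemma RR_nth: "RR $$ i = (if i \<le> 0 then 0 else tDy (phic (nat i)))"
  by (simp add: RR_def ext_phi[OF der_tDy] dser_nth[OF der_tDy])

lemma PP_low: "PP $$ 1 = 0" "PP $$ 2 = -1" "PP $$ 3 = - tDx zz"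
  by (simp_all add: PP_nth phic_simps der_simps[OF der_tDx])
lemma RR_low: "RR $$ 1 = -1" "RR $$ 2 = 0" "RR $$ 3 = - tDy zz - vy"
  by (simp_all add: RR_nth phic_simps der_simps[OF der_tDy] cst_half')

definition Psi :: "int \<Rightarrow> fn fls" where "Psi n = ext (Sfield n) phi"

lemma S_zz: "Sfield n zz = Zgen n" by simp

lemma Psi_eq: "Psi n = fF n + fls_const (fco n 2) * PP + fls_const (fco n 1) * RR"
proof (rule fls_eqI)
  fix i :: int
  have d: "der (Sfield n)" by (rule der_S)
  show "Psi n $$ i = (fF n + fls_const (fco n 2) * PP + fls_const (fco n 1) * RR) $$ i"
  proof (cases "i \<le> 3")
    case True
    then have "i \<le> 0 \<or> i = 1 \<or> i = 2 \<or> i = 3" by auto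
    then show ?thesis
    proof (elim disjE)
      assume i: "i \<le> 0"
      then show ?thesis using d by (simp add: Psi_def phi_nth fF_low PP_nth RR_nth phic_simps der_one der_zero)
    next
      assume i: "i = 1"
      have "fco n 1 = fF n $$ 1" by (simp add: fco_eq)
      then show ?thesis using d i by (simp add: Psi_def phi_nth PP_low RR_low phic_simps der_simps[OF d])
    next
      assume i: "i = 2"
      have "fco n 2 = fF n $$ 2" by (simp add: fco_eq)
      then show ?thesis using d i by (simp add: Psi_def phi_nth PP_low RR_low phic_simps der_simps[OF d])
    next
      assume i: "i = 3"
      have "fco n 3 = fF n $$ 3" by (simp add: fco_eq)
      then show ?thesis using d i
        by (simp add: Psi_def phi_nth PP_low RR_low phic_simps der_simps[OF d] Zgen_def algebra_simps)
    qed
  next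
    case False
    define j where "j = nat (i - 4)"
    have j: "i = int j + 4" using False by (simp add: j_def)
    have "fco n (j + 4) = fF n $$ i" by (simp add: fco_eq j)
    moreover have "nat (int j + 4) = Suc (Suc (Suc (Suc j)))" by simp
    ultimately show ?thesis using d by (simp add: Psi_def j phi_nth phic_simps PP_PhiC RR_PhiC PhiS_def add.commute)
  qed
qed



unbundle fps_syntax

definition Cx :: "int \<Rightarrow> fn \<Rightarrow> fn" where "Cx n p = Sfield n (tDx p) - tDx (Sfield n p)"
definition Cy :: "int \<Rightarrow> fn \<Rightarrow> fn" where "Cy n p = Sfield n (tDy p) - tDy (Sfield n p)"
definition Wx :: "int \<Rightarrow> fn fls" where "Wx n = ext (Cx n) phi"
definition Wy :: "int \<Rightarrow> fn fls" where "Wy n = ext (Cy n) phi"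

lemma der_Cx: "der (Cx n)"
  unfolding Cx_def[abs_def] by (rule der_comm[OF der_S der_tDx])
lemma der_Cy: "der (Cy n)"
  unfolding Cy_def[abs_def] by (rule der_comm[OF der_S der_tDy])

lemma tDx_tDy_pow: "tDy ((tDx ^^ a) p) = (tDx ^^ a) (tDy p)"
  by (induction a) (simp_all add: comm_xy[symmetric])

lemma Cx_Var: "Cx n (Var XC) = 0" "Cx n (Var YC) = 0" "Cx n (Var (ZC a b)) = 0"
  by (simp_all add: Cx_def der_zero[OF der_S] der_one[OF der_S] der_zero[OF der_tDx])
lemma Cy_Var: "Cy n (Var XC) = 0" "Cy n (Var YC) = 0" "Cy n (Var (ZC a False)) = 0"
  by (simp_all add: Cy_def der_zero[OF der_S] der_one[OF der_S] der_zero[OF der_tDy] tDx_tDy_pow)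

lemma phi_vars_low: "i \<le> 3 \<Longrightarrow> vars (phi $$ i) \<subseteq> {XC, YC, ZC 0 False}"
proof -
  assume i: "i \<le> 3"
  then have "i \<le> 0 \<or> i = 1 \<or> i = 2 \<or> i = 3" by auto
  then show ?thesis
  proof (elim disjE)
    assume "i \<le> 0" then show ?thesis by (simp add: phi_nth phic_simps)
  next
    assume "i = 1" then show ?thesis by (simp add: phi_nth phic_simps)
  next
    assume "i = 2" then show ?thesis by (simp add: phi_nth phic_simps)
  next
    assume i3: "i = 3"
    have "vars (- zz - cst (1/2) * vy ^ 2) \<subseteq> vars zz \<union> vars (cst (1/2) * vy ^ 2)"
      using vars_diff[of "- zz" "cst (1/2) * vy ^ 2"] by simp
    also have "\<dots> \<subseteq> {ZC 0 False} \<union> (vars (cst (1/2)) \<union> vars (vy ^ 2))"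
      using vars_mult[of "cst (1/2)" "vy ^ 2"] by auto
    also have "\<dots> \<subseteq> {XC, YC, ZC 0 False}" using vars_power[of vy 2] by auto
    finally show ?thesis using i3 by (simp add: phi_nth phic_simps)
  qed
qed

lemma Wx_low: assumes "i \<le> 3" shows "Wx n $$ i = 0"
proof -
  have "Cx n (phi $$ i) = 0"
  proof (rule der_zero_on[OF der_Cx])
    fix v assume "v \<in> vars (phi $$ i)"
    then have "v = XC \<or> v = YC \<or> v = ZC 0 False" using phi_vars_low[OF assms] by auto
    then show "Cx n (Var v) = 0" using Cx_Var by auto
  qed
  then show ?thesis by (simp add: Wx_def der_Cx)
qed

lemma Wy_low: assumes "i \<le> 3" shows "Wy n $$ i = 0"
proof -
  have "Cy n (phi $$ i) = 0"
  proof (rule der_zero_on[OF der_Cy])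
    fix v assume "v \<in> vars (phi $$ i)"
    then have "v = XC \<or> v = YC \<or> v = ZC 0 False" using phi_vars_low[OF assms] by auto
    then show "Cy n (Var v) = 0" using Cy_Var by auto
  qed
  then show ?thesis by (simp add: Wy_def der_Cy)
qed

lemma Wx_diff: "Wx n = ext (Sfield n) PP - ext tDx (Psi n)"
  unfolding Wx_def Cx_def[abs_def] PP_def Psi_def by (rule ext_comm[OF der_S der_tDx])
lemma Wy_diff: "Wy n = ext (Sfield n) RR - ext tDy (Psi n)"
  unfolding Wy_def Cy_def[abs_def] RR_def Psi_def by (rule ext_comm[OF der_S der_tDy])

lemma SQ: "ext (Sfield n) Qphi = 2 * phi * Psi n - fls_const (Sfield n zx) * phi - fls_const zx * Psi n - fls_const (Sfield n zy)"
  by (simp only: ext_Q[OF der_S] Psi_def[symmetric])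

lemma hSP: "ext (Sfield n) Qphi * PP + Qphi * ext (Sfield n) PP = 0"
  using arg_cong[OF QP, of "ext (Sfield n)"] by (simp add: ext_mult[OF der_S] ext_neg_one[OF der_S])

lemma hSR: "ext (Sfield n) Qphi * RR + Qphi * ext (Sfield n) RR = - (Psi n - fls_const (Sfield n zx))"
proof -
  have h0: "ext (Sfield n) (Qphi * RR) = ext (Sfield n) (- (phi - fls_const zx))" by (simp only: QR)
  show ?thesis
    using h0 by (simp only: ext_mult[OF der_S] ext_uminus[OF der_S] ext_diff[OF der_S]
         ext_const[OF der_S] Psi_def[symmetric])
qed

lemma Psi_H: "Psi n = fls_X_intpow n * fls_deriv phi - ev (qn n) + fls_const (fco n 2) * PP + fls_const (fco n 1) * RR"
  by (simp add: Psi_eq fF_def H0_def)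

lemma DPsi_x: "ext tDx (Psi n) = fls_X_intpow n * fls_deriv PP - (ev (map_poly tDx (qn n)) + ev (pderiv (qn n)) * PP)
   + fls_const (tDx (fco n 2)) * PP + fls_const (fco n 2) * ext tDx PP
   + fls_const (tDx (fco n 1)) * RR + fls_const (fco n 1) * ext tDy PP"
  by (simp only: Psi_eq fF_def ext_add[OF der_tDx] ext_diff[OF der_tDx] ext_const_mult[OF der_tDx]
       ext_H0[OF der_tDx] ext_ev[OF der_tDx] PP_def[symmetric] series_F1 add.assoc)

lemma DPsi_y: "ext tDy (Psi n) = fls_X_intpow n * fls_deriv RR - (ev (map_poly tDy (qn n)) + ev (pderiv (qn n)) * RR)
   + fls_const (tDy (fco n 2)) * PP + fls_const (fco n 2) * ext tDy PP
   + fls_const (tDy (fco n 1)) * RR + fls_const (fco n 1) * ext tDy RR"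
  by (simp only: Psi_eq fF_def ext_add[OF der_tDy] ext_diff[OF der_tDy] ext_const_mult[OF der_tDy]
       ext_H0[OF der_tDy] ext_ev[OF der_tDy] RR_def[symmetric] add.assoc)

lemma hX: "(2 * phi * PP - fls_const zxx * phi - fls_const zx * PP - fls_const zxy) * PP + Qphi * ext tDx PP = 0"
  using hxP by (simp only: X1_eq)
lemma hY: "(2 * phi * RR - fls_const zxy * phi - fls_const zx * RR - fls_const zyy) * PP + Qphi * ext tDy PP = 0"
  using hyP by (simp only: Y1_eq)
lemma hYR: "(2 * phi * RR - fls_const zxy * phi - fls_const zx * RR - fls_const zyy) * RR + Qphi * ext tDy RR = - (RR - fls_const zxy)"
  using hyR by (simp only: Y1_eq)

lemma QQWx_target: "Qphi * Qphi * Wx n =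
  - ((2 * phi - fls_const zx) * ev (qn n)) - (fls_const (Sfield n zy) + phi * fls_const (Sfield n zx))
  + Qphi * Qphi * ev (map_poly tDx (qn n)) - Qphi * ev (pderiv (qn n))
  + fls_const (tDx (fco n 2)) * Qphi + fls_const (tDx (fco n 1)) * Qphi * (phi - fls_const zx)
  + (fls_const (fco n 2) * fls_const zxy + fls_const (fco n 1) * fls_const zyy)
  + phi * (fls_const (fco n 2) * fls_const zxx + fls_const (fco n 1) * fls_const zxy)"
  by (rule Wx_alg[OF Qd QP RP Psi_H SQ hSP DPsi_x refl dQP hX hY Wx_diff])

lemma QQWy_target: "Qphi * Qphi * Wy n =
  Qphi * ev (qn n) - (2 * phi - fls_const zx) * (phi - fls_const zx) * ev (qn n)
  + Qphi * fls_const (Sfield n zx) - (fls_const (Sfield n zx) * phi + fls_const (Sfield n zy)) * (phi - fls_const zx)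
  + Qphi * Qphi * ev (map_poly tDy (qn n)) - ev (pderiv (qn n)) * Qphi * (phi - fls_const zx)
  + fls_const (tDy (fco n 2)) * Qphi + fls_const (tDy (fco n 1)) * Qphi * (phi - fls_const zx)
  + fls_const (fco n 2) + fls_const (fco n 2) * (fls_const zxy * phi + fls_const zyy)
  - fls_const (fco n 1) * Qphi * fls_const zxy
  + fls_const (fco n 1) * (phi - fls_const zx) * (fls_const zxy * phi + fls_const zyy)"
  by (rule Wy_alg[OF Qd QP RP Psi_H SQ hSR DPsi_y refl dQR hY hYR Wy_diff])



unbundle fps_syntax

section \<open>Q^2 W is a constant\<close>

lemma QQ_low: "j < -4 \<Longrightarrow> (Qphi * Qphi) $$ j = 0"
  using fls_mult_nth_bounds[of "-2" Qphi "-2" Qphi j] Q_low by simp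

lemma QQW_low:
  assumes W: "\<And>i. i \<le> 3 \<Longrightarrow> W $$ i = 0" and i: "i < 0"
  shows "(Qphi * Qphi * W) $$ i = 0"
proof -
  have "(Qphi * Qphi * W) $$ i = (\<Sum>k=-4..i-4. (Qphi * Qphi) $$ k * W $$ (i - k))"
    by (rule fls_mult_nth_bounds) (auto simp: QQ_low W)
  then show ?thesis using i by simp
qed

definition Mx :: "int \<Rightarrow> fn poly" where
  "Mx n = - ([:- zx, 2:] * qn n) - [:Sfield n zy, Sfield n zx:] + Qp * Qp * map_poly tDx (qn n) - Qp * pderiv (qn n)
     + [:tDx (fco n 2):] * Qp + [:tDx (fco n 1):] * Qp * [:- zx, 1:]
     + [:fco n 2 * zxy + fco n 1 * zyy, fco n 2 * zxx + fco n 1 * zxy:]"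

definition My :: "int \<Rightarrow> fn poly" where
  "My n = Qp * qn n - [:- zx, 2:] * [:- zx, 1:] * qn n + Qp * [:Sfield n zx:]
     - [:Sfield n zy, Sfield n zx:] * [:- zx, 1:] + Qp * Qp * map_poly tDy (qn n)
     - pderiv (qn n) * Qp * [:- zx, 1:] + [:tDy (fco n 2):] * Qp + [:tDy (fco n 1):] * Qp * [:- zx, 1:]
     + [:fco n 2:] + [:fco n 2:] * [:zyy, zxy:] - [:fco n 1:] * Qp * [:zxy:]
     + [:fco n 1:] * [:- zx, 1:] * [:zyy, zxy:]"

lemmas ev_simps = ev_add ev_diff ev_mult ev_uminus ev_pCons ev_0 Qphi_ev[symmetric]
lemmas const_split = fls_plus_const[symmetric] fls_const_mult_const[symmetric] fls_const_uminus
   fls_const_numeral fls_const_1 fls_const_0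

lemma ev_Mx: "ev (Mx n) =
  - ((2 * phi - fls_const zx) * ev (qn n)) - (fls_const (Sfield n zy) + phi * fls_const (Sfield n zx))
  + Qphi * Qphi * ev (map_poly tDx (qn n)) - Qphi * ev (pderiv (qn n))
  + fls_const (tDx (fco n 2)) * Qphi + fls_const (tDx (fco n 1)) * Qphi * (phi - fls_const zx)
  + (fls_const (fco n 2) * fls_const zxy + fls_const (fco n 1) * fls_const zyy)
  + phi * (fls_const (fco n 2) * fls_const zxx + fls_const (fco n 1) * fls_const zxy)"
  unfolding Mx_def by (simp only: ev_simps const_split) algebra

lemma ev_My: "ev (My n) =
  Qphi * ev (qn n) - (2 * phi - fls_const zx) * (phi - fls_const zx) * ev (qn n)
  + Qphi * fls_const (Sfield n zx) - (fls_const (Sfield n zx) * phi + fls_const (Sfield n zy)) * (phi - fls_const zx)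
  + Qphi * Qphi * ev (map_poly tDy (qn n)) - ev (pderiv (qn n)) * Qphi * (phi - fls_const zx)
  + fls_const (tDy (fco n 2)) * Qphi + fls_const (tDy (fco n 1)) * Qphi * (phi - fls_const zx)
  + fls_const (fco n 2) + fls_const (fco n 2) * (fls_const zxy * phi + fls_const zyy)
  - fls_const (fco n 1) * Qphi * fls_const zxy
  + fls_const (fco n 1) * (phi - fls_const zx) * (fls_const zxy * phi + fls_const zyy)"
  unfolding My_def by (simp only: ev_simps const_split) algebra

definition m0x :: "int \<Rightarrow> fn" where "m0x n = coeff (Mx n) 0"
definition m0y :: "int \<Rightarrow> fn" where "m0y n = coeff (My n) 0"

lemma QQWx: "Qphi * Qphi * Wx n = fls_const (m0x n)"
proof -
  have e: "Qphi * Qphi * Wx n = ev (Mx n)" by (simp only: QQWx_target ev_Mx)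
  have "ev (Mx n) = fls_const (coeff (Mx n) 0)"
    by (rule ev_eq_const) (simp add: e[symmetric] QQW_low Wx_low)
  then show ?thesis by (simp add: e m0x_def)
qed

lemma QQWy: "Qphi * Qphi * Wy n = fls_const (m0y n)"
proof -
  have e: "Qphi * Qphi * Wy n = ev (My n)" by (simp only: QQWy_target ev_My)
  have "ev (My n) = fls_const (coeff (My n) 0)"
    by (rule ev_eq_const) (simp add: e[symmetric] QQW_low Wy_low)
  then show ?thesis by (simp add: e m0y_def)
qed



unbundle fps_syntax

section \<open>Jacobi identity\<close>

lemma jacobi_fun: "Cx n (tDy p) - tDy (Cx n p) = Cy n (tDx p) - tDx (Cy n p)"
  by (simp add: Cx_def Cy_def der_diff[OF der_tDx] der_diff[OF der_tDy] comm_xy algebra_simps)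

lemma jacobi_series: "ext (Cx n) RR - ext tDy (Wx n) = ext (Cy n) PP - ext tDx (Wy n)"
proof -
  have "ext (Cx n) RR - ext tDy (Wx n) = ext (\<lambda>p. Cx n (tDy p) - tDy (Cx n p)) phi"
    unfolding RR_def Wx_def by (rule ext_comm[OF der_Cx der_tDy, symmetric])
  also have "\<dots> = ext (\<lambda>p. Cy n (tDx p) - tDx (Cy n p)) phi"
    by (simp only: jacobi_fun)
  also have "\<dots> = ext (Cy n) PP - ext tDx (Wy n)"
    unfolding PP_def Wy_def by (rule ext_comm[OF der_Cy der_tDx])
  finally show ?thesis .
qed

definition edef :: "int \<Rightarrow> fn" where "edef n = Cy n zy"

lemma Cx_zx: "Cx n zx = 0" and Cx_zy: "Cx n zy = 0" by (simp_all add: Cx_Var)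
lemma Cy_zx: "Cy n zx = 0" by (simp add: Cy_Var)

lemma ext_Cx_phi: "ext (Cx n) phi = Wx n" by (simp add: Wx_def)
lemma ext_Cy_phi: "ext (Cy n) phi = Wy n" by (simp add: Wy_def)

lemma hCxR: "(2 * phi * Wx n - fls_const zx * Wx n) * RR + Qphi * ext (Cx n) RR = - Wx n"
proof -
  have h0: "ext (Cx n) (Qphi * RR) = ext (Cx n) (- (phi - fls_const zx))" by (simp only: QR)
  have "ext (Cx n) Qphi = 2 * phi * Wx n - fls_const zx * Wx n"
    by (simp add: ext_Q[OF der_Cx] ext_Cx_phi Cx_Var)
  then show ?thesis using h0
    by (simp add: ext_mult[OF der_Cx] ext_uminus[OF der_Cx] ext_diff[OF der_Cx] ext_const[OF der_Cx] ext_Cx_phi Cx_Var)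
qed

lemma hCyP: "(2 * phi * Wy n - fls_const zx * Wy n - fls_const (edef n)) * PP + Qphi * ext (Cy n) PP = 0"
proof -
  have "ext (Cy n) Qphi = 2 * phi * Wy n - fls_const zx * Wy n - fls_const (edef n)"
    by (simp add: ext_Q[OF der_Cy] ext_Cy_phi Cy_Var edef_def)
  then show ?thesis
    using arg_cong[OF QP, of "ext (Cy n)"] by (simp add: ext_mult[OF der_Cy] ext_neg_one[OF der_Cy])
qed

lemma hDyW: "(2 * phi * RR - fls_const zxy * phi - fls_const zx * RR - fls_const zyy) * Qphi * Wx n
   + Qphi * (2 * phi * RR - fls_const zxy * phi - fls_const zx * RR - fls_const zyy) * Wx n
   + Qphi * Qphi * ext tDy (Wx n) = fls_const (tDy (m0x n))"
proof -
  have "ext tDy (Qphi * Qphi * Wx n) = fls_const (tDy (m0x n))"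
    by (simp add: QQWx ext_const[OF der_tDy])
  then show ?thesis by (simp only: ext_mult[OF der_tDy] Y1_eq distrib_right)
qed

lemma hDxW: "(2 * phi * PP - fls_const zxx * phi - fls_const zx * PP - fls_const zxy) * Qphi * Wy n
   + Qphi * (2 * phi * PP - fls_const zxx * phi - fls_const zx * PP - fls_const zxy) * Wy n
   + Qphi * Qphi * ext tDx (Wy n) = fls_const (tDx (m0y n))"
proof -
  have "ext tDx (Qphi * Qphi * Wy n) = fls_const (tDx (m0y n))"
    by (simp add: QQWy ext_const[OF der_tDx])
  then show ?thesis by (simp only: ext_mult[OF der_tDx] X1_eq distrib_right)
qed

lemma Jac_alg:
  fixes Q P R ph a b c d e Wx Wy M0 M1 E DM0 DM1 CxR CyP DyW DxW :: "fn fls"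
  assumes Q: "Q = ph^2 - a*ph - b" and QP: "Q*P = -1" and R: "R = (ph - a)*P"
    and Wx: "Q*Q*Wx = M0" and Wy: "Q*Q*Wy = M1"
    and CxR: "(2*ph*Wx - a*Wx)*R + Q*CxR = -Wx"
    and CyP: "(2*ph*Wy - a*Wy - E)*P + Q*CyP = 0"
    and DyW: "(2*ph*R - d*ph - a*R - e)*Q*Wx + Q*(2*ph*R - d*ph - a*R - e)*Wx + Q*Q*DyW = DM0"
    and DxW: "(2*ph*P - c*ph - a*P - d)*Q*Wy + Q*(2*ph*P - c*ph - a*P - d)*Wy + Q*Q*DxW = DM1"
    and J: "CxR - DyW = CyP - DxW"
  shows "- Q*M0 - (2*ph - a)*(ph - a)*M0 - 2*M0*Q*(d*ph + e) + Q*Q*(E + DM1 - DM0) + (2*ph - a)*M1 + 2*M1*Q*(c*ph + d) = 0"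
  using assms by algebra



unbundle fps_syntax

definition GG :: "int \<Rightarrow> fn" where "GG n = edef n + tDx (m0y n) - tDy (m0x n)"

definition Jpoly :: "int \<Rightarrow> fn poly" where
  "Jpoly n = (let a = zx; b = zy; c = zxx; d = zxy; e = zyy; m0 = m0x n; m1 = m0y n; G = GG n in
    [: b*m0 - a*a*m0 + 2*b*e*m0 + G*b*b - a*m1 - 2*b*d*m1,
       4*a*m0 + 2*a*e*m0 + 2*b*d*m0 + 2*G*a*b + 2*m1 - 2*a*d*m1 - 2*b*c*m1,
       -3*m0 - 2*e*m0 + 2*a*d*m0 - 2*G*b + G*a*a + 2*d*m1 - 2*a*c*m1,
       -2*d*m0 - 2*G*a + 2*c*m1,
       G :])"

lemmas const_split2 = fls_plus_const[symmetric] fls_minus_const[symmetric] fls_const_mult_const[symmetric]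
   fls_const_uminus fls_const_numeral fls_const_1 fls_const_0

lemma J_series: "- Qphi * fls_const (m0x n) - (2*phi - fls_const zx)*(phi - fls_const zx)*fls_const (m0x n)
   - 2*fls_const (m0x n)*Qphi*(fls_const zxy*phi + fls_const zyy)
   + Qphi*Qphi*(fls_const (edef n) + fls_const (tDx (m0y n)) - fls_const (tDy (m0x n)))
   + (2*phi - fls_const zx)*fls_const (m0y n) + 2*fls_const (m0y n)*Qphi*(fls_const zxx*phi + fls_const zxy) = 0"
  by (rule Jac_alg[OF Qd QP RP QQWx QQWy hCxR hCyP hDyW hDxW jacobi_series])

lemma ev_J: "ev (Jpoly n) = - Qphi * fls_const (m0x n) - (2*phi - fls_const zx)*(phi - fls_const zx)*fls_const (m0x n)
   - 2*fls_const (m0x n)*Qphi*(fls_const zxy*phi + fls_const zyy)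
   + Qphi*Qphi*(fls_const (edef n) + fls_const (tDx (m0y n)) - fls_const (tDy (m0x n)))
   + (2*phi - fls_const zx)*fls_const (m0y n) + 2*fls_const (m0y n)*Qphi*(fls_const zxx*phi + fls_const zxy)"
proof -
  have Q: "Qphi = phi^2 - fls_const zx * phi - fls_const zy" by (rule Qd)
  show ?thesis
    unfolding Jpoly_def Let_def GG_def
    by (simp only: ev_pCons ev_0 const_split2) (use Q in algebra)
qed

lemma Jpoly_zero: "Jpoly n = 0"
proof -
  have "ev (Jpoly n) = 0" by (simp only: ev_J J_series)
  then show ?thesis by (intro ev_eq_0_nonpos) simp
qed

lemma J_coeffs:
  "GG n = 0"
  "-2*zxy*m0x n - 2*GG n*zx + 2*zxx*m0y n = 0"
  "-3*m0x n - 2*zyy*m0x n + 2*zx*zxy*m0x n - 2*GG n*zy + GG n*zx*zx + 2*zxy*m0y n - 2*zx*zxx*m0y n = 0"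
proof -
  have "[: zy*m0x n - zx*zx*m0x n + 2*zy*zyy*m0x n + GG n*zy*zy - zx*m0y n - 2*zy*zxy*m0y n,
       4*zx*m0x n + 2*zx*zyy*m0x n + 2*zy*zxy*m0x n + 2*GG n*zx*zy + 2*m0y n - 2*zx*zxy*m0y n - 2*zy*zxx*m0y n,
       -3*m0x n - 2*zyy*m0x n + 2*zx*zxy*m0x n - 2*GG n*zy + GG n*zx*zx + 2*zxy*m0y n - 2*zx*zxx*m0y n,
       -2*zxy*m0x n - 2*GG n*zx + 2*zxx*m0y n,
       GG n :] = 0"
    using Jpoly_zero[of n] unfolding Jpoly_def Let_def .
  note h = this[unfolded pCons_eq_0_iff]
  from h show "GG n = 0"
    "-2*zxy*m0x n - 2*GG n*zx + 2*zxx*m0y n = 0"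
    "-3*m0x n - 2*zyy*m0x n + 2*zx*zxy*m0x n - 2*GG n*zy + GG n*zx*zx + 2*zxy*m0y n - 2*zx*zxx*m0y n = 0"
    by blast+
qed

definition KK :: fn where "KK = - zxx - 2*zy*zxx*zxx + 2*zx*zxx*zxy + 2*zxy*zxy"

lemma KK_nz: "KK \<noteq> 0"
proof
  assume "KK = 0"
  then have "pd (ZC 0 True) (pd (ZC 2 False) (pd (ZC 2 False) KK)) = 0" by (simp add: der_zero[OF der_pd])
  moreover have "pd (ZC 0 True) (pd (ZC 2 False) (pd (ZC 2 False) KK)) = -4"
    by (simp add: KK_def der_simps[OF der_pd] pd_Var algebra_simps)
  ultimately show False by simp
qed

lemma zxx_nz: "zxx \<noteq> 0"
proof
  assume "zxx = 0"
  then have "pd (ZC 2 False) zxx = 0" by (simp add: der_zero[OF der_pd])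
  then show False by (simp add: pd_Var)
qed

lemma m0_zero: "m0x n = 0 \<and> m0y n = 0 \<and> edef n = 0"
proof -
  have G: "GG n = 0" by (rule J_coeffs(1))
  have two: "(2::fn) \<noteq> 0" by simp
  have "2 * (zxx * m0y n - zxy * m0x n) = 0" using J_coeffs(2)[of n] G by (simp add: algebra_simps)
  then have h3: "zxx * m0y n = zxy * m0x n" using two by simp
  have h2: "-3*m0x n - 2*zyy*m0x n + 2*zx*zxy*m0x n + 2*zxy*m0y n - 2*zx*zxx*m0y n = 0"
    using J_coeffs(3)[of n] unfolding G by simp
  have e: "zyy = zy*zxx - zx*zxy - 1" by (simp add: zyy_def)
  have "m0x n * KK = 0" unfolding KK_def using h2 h3 e by algebra
  then have m0: "m0x n = 0" using KK_nz by simp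
  then have "zxx * m0y n = 0" using h3 by simp
  then have m1: "m0y n = 0" using zxx_nz by simp
  have "edef n = 0" using G m0 m1 by (simp add: GG_def der_zero[OF der_tDx] der_zero[OF der_tDy])
  then show ?thesis using m0 m1 by simp
qed

lemma QQ_nz: "Qphi * Qphi \<noteq> 0" using Q_nz by simp

lemma Wx_zero: "Wx n = 0"
  using QQWx[of n] m0_zero[of n] QQ_nz by simp
lemma Wy_zero: "Wy n = 0"
  using QQWy[of n] m0_zero[of n] QQ_nz by simp

lemma phi_PhiC: "phi $$ (int j + 4) = Var (PhiC j)"
proof -
  have "nat (int j + 4) = Suc (Suc (Suc (Suc j)))" by simp
  then show ?thesis by (simp add: phi_nth phic_simps)
qed

lemma Cx_zero: "Cx n p = 0"
proof (rule der_zero_on[OF der_Cx])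
  fix v
  show "Cx n (Var v) = 0"
  proof (cases v)
    case (PhiC j)
    have "Wx n $$ (int j + 4) = 0" by (simp add: Wx_zero)
    then show ?thesis using PhiC by (simp add: Wx_def der_Cx phi_PhiC)
  qed (simp_all add: Cx_Var)
qed

lemma S_tDx: "Sfield n (tDx p) = tDx (Sfield n p)"
  using Cx_zero[of n p] by (simp add: Cx_def)

lemma S_tDx_pow: "Sfield n ((tDx ^^ a) p) = (tDx ^^ a) (Sfield n p)"
  by (induction a) (simp_all add: S_tDx)

lemma Dx_eq_pow_tDx: "(Dx_eq ^^ a) zyy = (tDx ^^ a) zyy"
proof (induction a)
  case (Suc a)
  have "(Dx_eq ^^ Suc a) zyy = Dx_eq ((Dx_eq ^^ a) zyy)" by simp
  also have "\<dots> = tDx ((Dx_eq ^^ a) zyy)" by (rule tDx_Dx_eq[OF nophi_Dx_eq_pow, symmetric])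
  finally show ?case using Suc by simp
qed simp

lemma S_zyy: "Sfield n zyy = tDy (tDy (Zgen n))"
proof -
  have "edef n = 0" using m0_zero by simp
  then show ?thesis by (simp add: edef_def Cy_def)
qed

lemma Cy_zero: "Cy n p = 0"
proof (rule der_zero_on[OF der_Cy])
  fix v
  show "Cy n (Var v) = 0"
  proof (cases v)
    case (PhiC j)
    have "Wy n $$ (int j + 4) = 0" by (simp add: Wy_zero)
    then show ?thesis using PhiC by (simp add: Wy_def der_Cy phi_PhiC)
  next
    case (ZC a b)
    show ?thesis
    proof (cases b)
      case True
      have "Sfield n (tDy (Var (ZC a True))) = (tDx ^^ a) (tDy (tDy (Zgen n)))"
        by (simp add: Dx_eq_pow_tDx S_tDx_pow S_zyy)
      moreover have "tDy (Sfield n (Var (ZC a True))) = (tDx ^^ a) (tDy (tDy (Zgen n)))"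
        by (simp add: tDx_tDy_pow)
      ultimately show ?thesis using ZC True by (simp add: Cy_def)
    next
      case False
      then show ?thesis using ZC by (simp add: Cy_Var)
    qed
  qed (simp_all add: Cy_Var)
qed

lemma S_tDy: "Sfield n (tDy p) = tDy (Sfield n p)"
  using Cy_zero[of n p] by (simp add: Cy_def)


theorem mainTheorem12:
  fixes n :: int
  assumes "n \<le> 2"
  shows "(\<forall>p. Sfield n (tDx p) = tDx (Sfield n p)) \<and>
         (\<forall>p. Sfield n (tDy p) = tDy (Sfield n p))"
  using S_tDx S_tDy by blast


end
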